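(* Let $Z$ denote the image of $k[c]$ in $\mathcal{U}_\chi(\mathfrak{sl}_2)$. (1) If $\chi=0$ or $\chi=e$, then $Z\cong k[c]/\langle c^p-2c^{(p+1)/2}+c\rangle$. (2) If $\chi=ah/2$ with $a\in k^\times$, then $Z\cong k[c]/\langle c^p-2c^{(p+1)/2}+c-a^2\rangle$.
   Context: Let $k$ be an algebraically closed field of characteristic $p>2$ and $\mathfrak{sl}_2=\mathfrak{sl}_2(k)$ with basis $e=\begin{pmatrix}0&1\\0&0\end{pmatrix}$, $f=\begin{pmatrix}0&0\\1&0\end{pmatrix}$, $h=\begin{pmatrix}1&0\\0&-1\end{pmatrix}$. The reduced enveloping algebras are $\mathcal{U}_0(\mathfrak{sl}_2)=\mathcal{U}(\mathfrak{sl}_2)/\langle e^p,f^p,h^p-h\rangle$, $\mathcal{U}_e(\mathfrak{sl}_2)=\mathcal{U}(\mathfrak{sl}_2)/\langle e^p,f^p-1,h^p-h\rangle$, and for $a\in k^\times$, $\mathcal{U}_{ah/2}(\mathfrak{sl}_2)=\mathcal{U}(\mathfrak{sl}_2)/\langle e^p,f^p,h^p-h-a\rangle$. Let $c=(h-1)^2+4ef$, which generates the Harish-Chandra center $\mathcal{U}(\mathfrak{sl}_2)^{\mathrm{SL}_2}=k[c]$. *)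

theory Defs
  imports "HOL-Computational_Algebra.Polynomial"
begin

text \<open>Free associative algebra k<E,F,H> on the three generators of sl_2.
  Elements are coefficient functions on words (lists of generators); the
  genuine free algebra consists of those with finite support (all elements
  produced below have finite support).\<close>

datatype gen = E | F | H

type_synonym 'k fa = "gen list \<Rightarrow> 'k"

definition fa_add :: "'k::comm_ring_1 fa \<Rightarrow> 'k fa \<Rightarrow> 'k fa" where
  "fa_add x y = (\<lambda>w. x w + y w)"

definition fa_smult :: "'k::comm_ring_1 \<Rightarrow> 'k fa \<Rightarrow> 'k fa" where
  "fa_smult c x = (\<lambda>w. c * x w)"

definition fa_diff :: "'k::comm_ring_1 fa \<Rightarrow> 'k fa \<Rightarrow> 'k fa" where
  "fa_diff x y = (\<lambda>w. x w - y w)"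

definition fa_mult :: "'k::comm_ring_1 fa \<Rightarrow> 'k fa \<Rightarrow> 'k fa" where
  "fa_mult x y = (\<lambda>w. \<Sum>i\<le>length w. x (take i w) * y (drop i w))"

definition fa_scalar :: "'k::comm_ring_1 \<Rightarrow> 'k fa" where
  "fa_scalar c = (\<lambda>w. if w = [] then c else 0)"

definition fa_gen :: "gen \<Rightarrow> 'k::comm_ring_1 fa" where
  "fa_gen g = (\<lambda>w. if w = [g] then 1 else 0)"

definition fa_pow :: "'k::comm_ring_1 fa \<Rightarrow> nat \<Rightarrow> 'k fa" where
  "fa_pow x n = ((fa_mult x) ^^ n) (fa_scalar 1)"

definition fa_comm :: "'k::comm_ring_1 fa \<Rightarrow> 'k fa \<Rightarrow> 'k fa" where
  "fa_comm x y = fa_diff (fa_mult x y) (fa_mult y x)"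

definition fa_poly :: "'k::comm_ring_1 poly \<Rightarrow> 'k fa \<Rightarrow> 'k fa" where
  "fa_poly q x = (\<lambda>w. \<Sum>i\<le>degree q. coeff q i * fa_pow x i w)"

text \<open>Defining relations of U(sl_2) together with the p-central relations
  e^p = 0, f^p = sf, h^p - h = sh (p = CHAR('k)).  U_0: sf = 0, sh = 0;
  U_e: sf = 1, sh = 0; U_{ah/2}: sf = 0, sh = a.\<close>
definition red_rels :: "'k::comm_ring_1 \<Rightarrow> 'k \<Rightarrow> 'k fa set" where
  "red_rels sf sh =
    { fa_diff (fa_comm (fa_gen E) (fa_gen F)) (fa_gen H),
      fa_diff (fa_comm (fa_gen H) (fa_gen E)) (fa_smult 2 (fa_gen E)),
      fa_add (fa_comm (fa_gen H) (fa_gen F)) (fa_smult 2 (fa_gen F)),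
      fa_pow (fa_gen E) CHAR('k),
      fa_diff (fa_pow (fa_gen F) CHAR('k)) (fa_scalar sf),
      fa_diff (fa_diff (fa_pow (fa_gen H) CHAR('k)) (fa_gen H)) (fa_scalar sh) }"

inductive_set fa_ideal :: "'k::comm_ring_1 fa set \<Rightarrow> 'k fa set" for R where
  zero: "fa_scalar 0 \<in> fa_ideal R"
| rel: "r \<in> R \<Longrightarrow> r \<in> fa_ideal R"
| add: "x \<in> fa_ideal R \<Longrightarrow> y \<in> fa_ideal R \<Longrightarrow> fa_add x y \<in> fa_ideal R"
| smult: "x \<in> fa_ideal R \<Longrightarrow> fa_smult c x \<in> fa_ideal R"
| lmult: "x \<in> fa_ideal R \<Longrightarrow> fa_mult (fa_gen g) x \<in> fa_ideal R"
| rmult: "x \<in> fa_ideal R \<Longrightarrow> fa_mult x (fa_gen g) \<in> fa_ideal R"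

definition casimir :: "'k::comm_ring_1 fa" where
  "casimir = fa_add (fa_pow (fa_diff (fa_gen H) (fa_scalar 1)) 2)
                    (fa_smult 4 (fa_mult (fa_gen E) (fa_gen F)))"

text \<open>q(c) = 0 in U_chi = U(sl_2)/<...> iff q(c) lies in the ideal.\<close>
definition vanishes_in :: "'k::comm_ring_1 \<Rightarrow> 'k \<Rightarrow> 'k fa \<Rightarrow> bool" where
  "vanishes_in sf sh x \<longleftrightarrow> x \<in> fa_ideal (red_rels sf sh)"

end

theory Submission
  imports Defs "HOL-Library.Poly_Mapping" "HOL-Library.Function_Algebras"
    "HOL-Computational_Algebra.Polynomial" "HOL-Computational_Algebra.Primes" "HOL-Number_Theory.Cong"
begin

datatype wd = Wd (unwd: "gen list")

instantiation wd :: monoid_add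
begin
definition zero_wd :: wd where "zero_wd = Wd []"
definition plus_wd :: "wd \<Rightarrow> wd \<Rightarrow> wd" where "plus_wd a b = Wd (unwd a @ unwd b)"
instance by standard (auto simp: zero_wd_def plus_wd_def)
end

lemma plus_Wd[simp]: "Wd a + Wd b = Wd (a @ b)" by (simp add: plus_wd_def)
lemma zero_Wd: "0 = Wd []" by (simp add: zero_wd_def)

type_synonym 'k fx = "wd \<Rightarrow>\<^sub>0 'k"

definition Psi :: "'k::comm_ring_1 fx \<Rightarrow> 'k fa" where
  "Psi X = (\<lambda>w. Poly_Mapping.lookup X (Wd w))"

lemma Psi_inj: "Psi X = Psi Y \<Longrightarrow> X = Y"
  unfolding Psi_def
  by (metis poly_mapping_eqI wd.exhaust)

lemma Psi_add: "Psi (X + Y) = fa_add (Psi X) (Psi Y)"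
  by (simp add: Psi_def fa_add_def lookup_add)

lemma Psi_diff: "Psi (X - Y) = fa_diff (Psi X) (Psi Y)"
  by (simp add: Psi_def fa_diff_def lookup_minus)

lemma Psi_zero: "Psi 0 = fa_scalar 0"
  by (simp add: Psi_def fa_scalar_def fun_eq_iff)

lemma Psi_single: "Psi (Poly_Mapping.single (Wd u) c) = (\<lambda>w. if w = u then c else 0)"
  by (auto simp: Psi_def fun_eq_iff lookup_single when_def)

lemma Psi_one: "Psi (1::'k::comm_ring_1 fx) = fa_scalar 1"
  by (auto simp: Psi_def fun_eq_iff lookup_one when_def fa_scalar_def zero_Wd)

definition sc :: "'k::comm_ring_1 \<Rightarrow> 'k fx" where "sc c = Poly_Mapping.single 0 c"
definition gn :: "gen \<Rightarrow> 'k::comm_ring_1 fx" where "gn g = Poly_Mapping.single (Wd [g]) 1"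

lemma Psi_sc: "Psi (sc c) = fa_scalar c"
  by (auto simp: sc_def zero_Wd Psi_single fa_scalar_def)

lemma Psi_gn: "Psi (gn g) = fa_gen g"
  by (auto simp: gn_def Psi_single fa_gen_def)

lemma lookup_sc_mult: "Poly_Mapping.lookup (sc c * X) w = c * Poly_Mapping.lookup X w"
  unfolding sc_def mult_map_scale_conv_mult[symmetric]
  by (simp add: Poly_Mapping.map.rep_eq when_def)

lemma Psi_smult: "Psi (sc c * X) = fa_smult c (Psi X)"
  by (simp add: Psi_def fa_smult_def lookup_sc_mult)

lemma Psi_mult: "Psi (X * Y) = fa_mult (Psi X) (Psi Y)"
proof -
  have "Poly_Mapping.lookup (X * Y) (Wd w) = (\<Sum>i\<le>length w. Poly_Mapping.lookup X (Wd (take i w)) * Poly_Mapping.lookup Y (Wd (drop i w)))" for w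
  proof -
    have "Poly_Mapping.lookup (X * Y) (Wd w) = prod_fun (Poly_Mapping.lookup X) (Poly_Mapping.lookup Y) (Wd w)"
      by (simp add: times_poly_mapping.rep_eq)
    also have "\<dots> = (\<Sum>(a, b). Poly_Mapping.lookup X a * Poly_Mapping.lookup Y b when Wd w = a + b)"
      by (rule prod_fun_unfold_prod) auto
    also have "\<dots> = (\<Sum>ab\<in>(\<lambda>i. (Wd (take i w), Wd (drop i w))) ` {..length w}.
                       (case ab of (a, b) \<Rightarrow> Poly_Mapping.lookup X a * Poly_Mapping.lookup Y b when Wd w = a + b))"
    proof (rule Sum_any.expand_superset)
      show "finite ((\<lambda>i. (Wd (take i w), Wd (drop i w))) ` {..length w})" by simp
      show "{ab. (case ab of (a, b) \<Rightarrow> Poly_Mapping.lookup X a * Poly_Mapping.lookup Y b when Wd w = a + b) \<noteq> 0}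
            \<subseteq> (\<lambda>i. (Wd (take i w), Wd (drop i w))) ` {..length w}"
      proof
        fix ab assume "ab \<in> {ab. (case ab of (a, b) \<Rightarrow> Poly_Mapping.lookup X a * Poly_Mapping.lookup Y b when Wd w = a + b) \<noteq> 0}"
        then obtain a b where ab: "ab = (a, b)" "Wd w = a + b" by (cases ab) (auto simp: when_def split: if_splits)
        obtain u v where uv: "a = Wd u" "b = Wd v" by (cases a, cases b) auto
        with ab have "w = u @ v" by simp
        then show "ab \<in> (\<lambda>i. (Wd (take i w), Wd (drop i w))) ` {..length w}"
          using ab uv by (intro image_eqI[of _ _ "length u"]) auto
      qed
    qed
    also have "\<dots> = (\<Sum>i\<le>length w. Poly_Mapping.lookup X (Wd (take i w)) * Poly_Mapping.lookup Y (Wd (drop i w)))"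
    proof (subst sum.reindex)
      show "inj_on (\<lambda>i. (Wd (take i w), Wd (drop i w))) {..length w}"
        by (rule inj_onI) (auto, metis length_take min.absorb2)
    qed (auto simp: when_def)
    finally show ?thesis .
  qed
  then show ?thesis by (simp add: Psi_def fa_mult_def)
qed

lemma single_plus_update: "a \<notin> Poly_Mapping.keys f \<Longrightarrow> Poly_Mapping.update a b f = Poly_Mapping.single a b + f"
  by (rule poly_mapping_eqI) (auto simp: lookup_update lookup_add lookup_single when_def in_keys_iff)

lemma fx_induct [case_names zero single_add]:
  assumes "P 0" and "\<And>a b f. P f \<Longrightarrow> P (Poly_Mapping.single a b + f)"
  shows "P X"
proof (induction X rule: update_induct)
  case const then show ?case using assms(1) .
next
  case (update f a b) then show ?case using assms(2) single_plus_update by metis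
qed

lemma sc_mult_comm: "sc c * X = X * sc c"
proof (induction X rule: fx_induct)
  case zero then show ?case by simp
next
  case (single_add a b f)
  have "sc c * Poly_Mapping.single a b = Poly_Mapping.single a b * sc c"
    by (simp add: sc_def mult_single mult.commute)
  then show ?case using single_add by (simp add: algebra_simps)
qed

lemma sc_mult: "sc (a * b) = sc a * sc b" by (simp add: sc_def mult_single)
lemma sc_add: "sc (a + b) = sc a + sc b" by (simp add: sc_def single_add)
lemma sc_diff: "sc (a - b) = sc a - sc b" by (simp add: sc_def single_diff)
lemma sc_uminus: "sc (- a) = - sc a" by (simp add: sc_def single_uminus)
lemma sc_one[simp]: "sc 1 = 1" by (simp add: sc_def)
lemma sc_zero[simp]: "sc 0 = 0" by (simp add: sc_def)
lemma sc_of_nat: "sc (of_nat n) = of_nat n" by (simp add: sc_def)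
lemma sc_numeral: "sc (numeral n) = numeral n" by (simp add: sc_def)
lemma sc_power: "sc (a ^ n) = sc a ^ n" by (induction n) (auto simp: sc_mult)

lemma sc_comm_left: "sc c * (X * Y) = X * (sc c * Y)"
  by (metis mult.assoc sc_mult_comm)

lemma Psi_pow: "Psi (X ^ n) = fa_pow (Psi X) n"
  by (induction n) (auto simp: fa_pow_def Psi_one Psi_mult)

lemma Psi_sum: "Psi (sum u A) = (\<lambda>w. \<Sum>i\<in>A. Psi (u i) w)"
  by (simp add: Psi_def lookup_sum)

definition JJ :: "'k::comm_ring_1 \<Rightarrow> 'k \<Rightarrow> 'k fx set" where
  "JJ sf sh = {X. Psi X \<in> fa_ideal (red_rels sf sh)}"

lemma JJ_zero: "0 \<in> JJ sf sh"
  by (simp add: JJ_def Psi_zero fa_ideal.zero)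

lemma JJ_add: "X \<in> JJ sf sh \<Longrightarrow> Y \<in> JJ sf sh \<Longrightarrow> X + Y \<in> JJ sf sh"
  by (simp add: JJ_def Psi_add fa_ideal.add)

lemma JJ_sc: "X \<in> JJ sf sh \<Longrightarrow> sc c * X \<in> JJ sf sh"
  by (simp add: JJ_def Psi_smult fa_ideal.smult)

lemma JJ_gn_l: "X \<in> JJ sf sh \<Longrightarrow> gn g * X \<in> JJ sf sh"
  by (simp add: JJ_def Psi_mult Psi_gn fa_ideal.lmult)

lemma JJ_gn_r: "X \<in> JJ sf sh \<Longrightarrow> X * gn g \<in> JJ sf sh"
  by (simp add: JJ_def Psi_mult Psi_gn fa_ideal.rmult)

lemma single_cons: "Poly_Mapping.single (Wd (g # w)) (1::'k::comm_ring_1) = gn g * Poly_Mapping.single (Wd w) 1"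
  by (simp add: gn_def mult_single)

lemma single_snoc: "Poly_Mapping.single (Wd (w @ [g])) (1::'k::comm_ring_1) = Poly_Mapping.single (Wd w) 1 * gn g"
  by (simp add: gn_def mult_single)

lemma single_sc: "Poly_Mapping.single a (b::'k::comm_ring_1) = sc b * Poly_Mapping.single a 1"
  by (simp add: sc_def mult_single)

lemma JJ_word_l: "X \<in> JJ sf sh \<Longrightarrow> Poly_Mapping.single (Wd w) 1 * X \<in> JJ sf sh"
proof (induction w)
  case Nil then show ?case by (simp add: zero_Wd[symmetric])
next
  case (Cons g w) then show ?case by (simp add: single_cons mult.assoc JJ_gn_l)
qed

lemma JJ_word_r: "X \<in> JJ sf sh \<Longrightarrow> X * Poly_Mapping.single (Wd w) 1 \<in> JJ sf sh"
proof (induction w rule: rev_induct)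
  case Nil then show ?case by (simp add: zero_Wd[symmetric])
next
  case (snoc g w) then show ?case by (simp add: single_snoc mult.assoc[symmetric] JJ_gn_r)
qed

lemma JJ_lmul: "X \<in> JJ sf sh \<Longrightarrow> Y * X \<in> JJ sf sh"
proof (induction Y rule: fx_induct)
  case zero then show ?case by (simp add: JJ_zero)
next
  case (single_add a b f)
  obtain w where a: "a = Wd w" by (cases a)
  have "Poly_Mapping.single a b * X \<in> JJ sf sh"
    using single_add by (simp add: a single_sc[of _ b] mult.assoc JJ_sc JJ_word_l)
  then show ?case using single_add by (simp add: distrib_right JJ_add)
qed

lemma JJ_rmul: "X \<in> JJ sf sh \<Longrightarrow> X * Y \<in> JJ sf sh"
proof (induction Y rule: fx_induct)
  case zero then show ?case by (simp add: JJ_zero)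
next
  case (single_add a b f)
  obtain w where a: "a = Wd w" by (cases a)
  have "X * Poly_Mapping.single a b \<in> JJ sf sh"
    using single_add JJ_word_r[of X sf sh w] JJ_sc
    by (metis a single_sc sc_comm_left)
  then show ?case using single_add by (simp add: distrib_left JJ_add)
qed

locale rideal =
  fixes J :: "'a::ring_1 set"
  assumes J0: "0 \<in> J" and Jadd: "x \<in> J \<Longrightarrow> y \<in> J \<Longrightarrow> x + y \<in> J"
    and Jl: "x \<in> J \<Longrightarrow> y * x \<in> J" and Jr: "x \<in> J \<Longrightarrow> x * y \<in> J"
begin

lemma Jneg: "x \<in> J \<Longrightarrow> - x \<in> J"
  using Jl[of x "-1"] by simp

lemma Jdiff: "x \<in> J \<Longrightarrow> y \<in> J \<Longrightarrow> x - y \<in> J"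
  using Jadd Jneg by (metis diff_conv_add_uminus)

lemma Jsum: "(\<And>i. i \<in> A \<Longrightarrow> u i \<in> J) \<Longrightarrow> sum u A \<in> J"
  by (induction A rule: infinite_finite_induct) (auto simp: J0 Jadd)

definition cg (infix "\<approx>" 50) where "x \<approx> y \<longleftrightarrow> x - y \<in> J"

lemma cg_refl[simp]: "x \<approx> x" by (simp add: cg_def J0)
lemma cg_sym: "x \<approx> y \<Longrightarrow> y \<approx> x" unfolding cg_def using Jneg by fastforce
lemma cg_trans[trans]: "x \<approx> y \<Longrightarrow> y \<approx> z \<Longrightarrow> x \<approx> z"
  unfolding cg_def using Jadd by fastforce
lemma eq_cg_trans[trans]: "x = y \<Longrightarrow> y \<approx> z \<Longrightarrow> x \<approx> z" by simp
lemma cg_eq_trans[trans]: "x \<approx> y \<Longrightarrow> y = z \<Longrightarrow> x \<approx> z" by simp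
lemma cg_add: "x \<approx> x' \<Longrightarrow> y \<approx> y' \<Longrightarrow> x + y \<approx> x' + y'"
  unfolding cg_def using Jadd by (metis add_diff_add)
lemma cg_diff: "x \<approx> x' \<Longrightarrow> y \<approx> y' \<Longrightarrow> x - y \<approx> x' - y'"
  unfolding cg_def using Jdiff by (metis diff_diff_eq2 diff_add_eq diff_diff_add add_diff_add
      diff_add_cancel add.commute)
lemma cg_mult: "x \<approx> x' \<Longrightarrow> y \<approx> y' \<Longrightarrow> x * y \<approx> x' * y'"
proof -
  assume "x \<approx> x'" "y \<approx> y'"
  then have "(x - x') * y \<in> J" "x' * (y - y') \<in> J" using Jl Jr unfolding cg_def by auto
  then have "(x - x') * y + x' * (y - y') \<in> J" by (rule Jadd)
  then show ?thesis unfolding cg_def by (simp add: algebra_simps)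
qed
lemma cg_lmul: "y \<approx> y' \<Longrightarrow> x * y \<approx> x * y'" by (simp add: cg_mult)
lemma cg_rmul: "x \<approx> x' \<Longrightarrow> x * y \<approx> x' * y" by (simp add: cg_mult)
lemma cg_J: "x \<in> J \<Longrightarrow> x \<approx> 0" by (simp add: cg_def)
lemma cg_J_iff: "x \<approx> 0 \<longleftrightarrow> x \<in> J" by (simp add: cg_def)
lemma cg_diff_J: "x - y \<in> J \<Longrightarrow> x \<approx> y" by (simp add: cg_def)
lemma cg_power: "x \<approx> y \<Longrightarrow> x ^ n \<approx> y ^ n"
  by (induction n) (auto simp: cg_mult)

lemma cg_comm_power: "x * y \<approx> y * x \<Longrightarrow> x ^ n * y \<approx> y * x ^ n"
proof (induction n)
  case 0 then show ?case by simp
next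
  case (Suc n)
  have "x ^ Suc n * y = x * (x ^ n * y)" by (simp add: mult.assoc)
  also have "\<dots> \<approx> x * (y * x ^ n)" using Suc by (intro cg_lmul) auto
  also have "\<dots> = (x * y) * x ^ n" by (simp add: mult.assoc)
  also have "\<dots> \<approx> (y * x) * x ^ n" using Suc by (intro cg_rmul) auto
  also have "\<dots> = y * x ^ Suc n" by (simp add: mult.assoc power_Suc)
  finally show ?case .
qed

end

definition ev :: "'k::comm_ring_1 poly \<Rightarrow> 'k fx \<Rightarrow> 'k fx" where
  "ev q X = (\<Sum>i\<le>degree q. sc (coeff q i) * X ^ i)"

lemma ev_bound: "degree q \<le> n \<Longrightarrow> ev q X = (\<Sum>i\<le>n. sc (coeff q i) * X ^ i)"
  unfolding ev_def by (rule sum.mono_neutral_left) (auto simp: coeff_eq_0)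

lemma ev_add: "ev (p + q) X = ev p X + ev q X"
proof -
  define n where "n = max (degree p) (degree q)"
  have "degree (p + q) \<le> n" by (simp add: n_def degree_add_le)
  then show ?thesis
    by (simp add: ev_bound[of _ n] n_def coeff_add sc_add distrib_right sum.distrib)
qed

lemma ev_smult: "ev (smult a q) X = sc a * ev q X"
  by (simp add: ev_bound[of _ "degree q"] degree_smult_le sum_distrib_left sc_mult mult.assoc)

lemma ev_pCons: "ev (pCons a q) X = sc a + X * ev q X"
proof -
  have "ev (pCons a q) X = (\<Sum>i\<le>Suc (degree q). sc (coeff (pCons a q) i) * X ^ i)"
    by (rule ev_bound) (simp add: degree_pCons_le)
  also have "\<dots> = sc a + (\<Sum>i\<le>degree q. sc (coeff q i) * X ^ Suc i)"
    by (subst sum.atMost_Suc_shift) simp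
  also have "(\<Sum>i\<le>degree q. sc (coeff q i) * X ^ Suc i) = X * ev q X"
    by (simp add: ev_def sum_distrib_left sc_comm_left power_Suc mult.assoc)
  finally show ?thesis .
qed

lemma ev_0[simp]: "ev 0 X = 0" by (simp add: ev_def)

lemma ev_mult: "ev (p * q) X = ev p X * ev q X"
proof (induction p)
  case 0 then show ?case by simp
next
  case (pCons a p)
  have "pCons a p * q = smult a q + pCons 0 (p * q)" by simp
  then have "ev (pCons a p * q) X = sc a * ev q X + X * ev (p * q) X"
    by (simp add: ev_add ev_smult ev_pCons)
  then show ?case using pCons by (simp add: ev_pCons algebra_simps)
qed

lemma ev_const[simp]: "ev [:c:] X = sc c" by (simp add: ev_def)
lemma ev_one[simp]: "ev 1 X = 1" by (simp add: ev_def)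
lemma ev_lin: "ev [:c, 1:] X = sc c + X" by (simp add: ev_pCons)
lemma ev_uminus: "ev (- p) X = - ev p X"
  by (metis add_eq_0_iff2 ev_0 ev_add neg_eq_iff_add_eq_0)
lemma ev_diff: "ev (p - q) X = ev p X - ev q X"
  by (metis diff_conv_add_uminus ev_add ev_uminus)
lemma ev_monom: "ev (monom c n) X = sc c * X ^ n"
proof (induction n)
  case 0 then show ?case by (simp add: monom_0)
next
  case (Suc n) then show ?case by (simp add: monom_Suc ev_pCons sc_comm_left power_Suc)
qed
lemma ev_pX: "ev [:0, 1:] X = X" by (simp add: ev_pCons)

lemma Psi_ev: "Psi (ev q X) = fa_poly q (Psi X)"
  by (simp add: ev_def fa_poly_def Psi_sum Psi_smult Psi_pow fa_smult_def)

abbreviation "ee \<equiv> gn E"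
abbreviation "ff \<equiv> gn F"
abbreviation "hh \<equiv> gn H"
definition cc :: "'k::comm_ring_1 fx" where "cc = (hh - 1) ^ 2 + 4 * (ee * ff)"

lemma Psi_num_mult: "Psi (numeral n * X) = fa_smult (numeral n) (Psi X)"
  by (metis Psi_smult sc_numeral)

lemma Psi_cc: "Psi cc = casimir"
  unfolding cc_def casimir_def
  by (simp only: Psi_add Psi_num_mult) (simp add: Psi_pow Psi_diff Psi_gn Psi_one Psi_mult)

definition rels :: "'k::comm_ring_1 \<Rightarrow> 'k \<Rightarrow> 'k fx set" where
  "rels sf sh = {ee * ff - ff * ee - hh, hh * ee - ee * hh - 2 * ee, hh * ff - ff * hh + 2 * ff,
     ee ^ CHAR('k), ff ^ CHAR('k) - sc sf, hh ^ CHAR('k) - hh - sc sh}"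

lemma Psi_rels: "Psi ` rels sf sh = red_rels sf sh"
  unfolding rels_def red_rels_def
  by (simp only: Psi_diff Psi_add Psi_num_mult image_insert image_empty)
    (simp add: Psi_mult Psi_gn Psi_pow Psi_sc fa_comm_def)

lemma rels_JJ: "r \<in> rels sf sh \<Longrightarrow> r \<in> JJ sf sh"
  unfolding JJ_def using Psi_rels by (blast intro: fa_ideal.rel)

lemma JJ_rideal: "rideal (JJ sf sh)"
  by unfold_locales (auto simp: JJ_zero JJ_add JJ_lmul JJ_rmul)

context
  assumes pr: "prime CHAR('k::field)" and p2: "CHAR('k) > 2"
begin

lemma frob_add: "(x + y :: 'k) ^ CHAR('k) = x ^ CHAR('k) + y ^ CHAR('k)"
  by (rule freshmans_dream[OF pr refl])

lemma frob_diff: "(x - y :: 'k) ^ CHAR('k) = x ^ CHAR('k) - y ^ CHAR('k)"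
  using frob_add[of "x - y" y] by (simp add: algebra_simps)

lemma frob_of_nat: "(of_nat n :: 'k) ^ CHAR('k) = of_nat n"
proof (induction n)
  case 0 then show ?case using p2 by simp
next
  case (Suc n) then show ?case using frob_add[of "of_nat n" 1] by (simp add: add.commute)
qed

lemma odd_p: "odd CHAR('k)"
  using pr p2 by (metis prime_odd_nat)

lemma frob_neg: "(- x :: 'k) ^ CHAR('k) = - (x ^ CHAR('k))"
  using odd_p by (simp add: power_minus_odd)

lemma of_nat_inj_p: "i < CHAR('k) \<Longrightarrow> j < CHAR('k) \<Longrightarrow> (of_nat i :: 'k) = of_nat j \<Longrightarrow> i = j"
  by (metis of_nat_eq_iff_cong_CHAR cong_less_modulus_unique_nat)

lemma of_nat_2_inj_p: "i < CHAR('k) \<Longrightarrow> j < CHAR('k) \<Longrightarrow> (of_nat (2 * i) :: 'k) = of_nat (2 * j) \<Longrightarrow> i = j"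
proof -
  assume ij: "i < CHAR('k)" "j < CHAR('k)" and eq: "(of_nat (2 * i) :: 'k) = of_nat (2 * j)"
  have "coprime 2 CHAR('k)" using odd_p by simp
  then have "[i = j] (mod CHAR('k))"
    using eq by (simp add: of_nat_eq_iff_cong_CHAR cong_mult_lcancel_nat del: of_nat_mult)
  then show "i = j" using ij cong_less_modulus_unique_nat by blast
qed

lemma monic_lin_prod:
  "degree (\<Prod>i<n. [:- a i, 1:] :: 'k poly) = n \<and> lead_coeff (\<Prod>i<n. [:- a i, 1:] :: 'k poly) = 1"
proof
  show d: "degree (\<Prod>i<n. [:- a i, 1:] :: 'k poly) = n" by (simp add: degree_prod_sum_eq)
  show "lead_coeff (\<Prod>i<n. [:- a i, 1:] :: 'k poly) = 1" by (simp add: lead_coeff_prod)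
qed

lemma prod_2i_poly:
  "(\<Prod>i<CHAR('k). [:- of_nat (2 * i), 1:]) = (monom 1 CHAR('k) - [:0, 1:] :: 'k poly)"
proof (rule poly_eqI_degree_lead_coeff[where n = "CHAR('k)" and A = "(\<lambda>i. of_nat (2 * i)) ` {..<CHAR('k)}"])
  have dm: "degree (monom (1::'k) CHAR('k) - [:0, 1:]) = CHAR('k)"
  proof -
    have "degree (monom (1::'k) CHAR('k) + (- [:0, 1:])) = CHAR('k)"
      using p2 by (subst degree_add_eq_left) (auto simp: degree_monom_eq)
    then show ?thesis by (simp only: diff_conv_add_uminus)
  qed
  show "coeff (\<Prod>i<CHAR('k). [:- of_nat (2 * i), 1:] :: 'k poly) CHAR('k) = coeff (monom 1 CHAR('k) - [:0, 1:]) CHAR('k)"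
  proof -
    obtain P where P: "P = (\<Prod>i<CHAR('k). [:- of_nat (2 * i), 1:] :: 'k poly)" by blast
    have m: "degree P = CHAR('k) \<and> lead_coeff P = 1"
      unfolding P by (rule monic_lin_prod)
    then have "coeff P CHAR('k) = 1" by metis
    moreover have "coeff (monom (1::'k) CHAR('k) - [:0, 1:]) CHAR('k) = 1"
      using p2 by (simp add: coeff_pCons split: nat.split)
    ultimately show ?thesis using P by simp
  qed
  show "CHAR('k) \<le> card ((\<lambda>i. of_nat (2 * i) :: 'k) ` {..<CHAR('k)})"
  proof -
    have "inj_on (\<lambda>i. of_nat (2 * i) :: 'k) {..<CHAR('k)}"
      by (rule inj_onI) (use of_nat_2_inj_p in blast)
    then show ?thesis by (simp only: card_image card_lessThan)
  qed
  show "degree (\<Prod>i<CHAR('k). [:- of_nat (2 * i), 1:] :: 'k poly) \<le> CHAR('k)"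
    using monic_lin_prod[where n="CHAR('k)" and a="\<lambda>i. of_nat (2 * i)"] by simp
  show "degree (monom (1::'k) CHAR('k) - [:0, 1:]) \<le> CHAR('k)" using dm by simp
  fix z assume "z \<in> (\<lambda>i. of_nat (2 * i) :: 'k) ` {..<CHAR('k)}"
  then obtain i where i: "i < CHAR('k)" "z = of_nat (2 * i)" by auto
  have "poly (\<Prod>i<CHAR('k). [:- of_nat (2 * i), 1:] :: 'k poly) z = 0"
    using i by (auto simp: poly_prod intro!: prod_zero bexI[of _ i])
  moreover have "poly (monom (1::'k) CHAR('k) - [:0, 1:]) z = 0"
    using i frob_of_nat[of "2 * i"] by (simp add: poly_monom)
  ultimately show "poly (\<Prod>i<CHAR('k). [:- of_nat (2 * i), 1:] :: 'k poly) z = poly (monom 1 CHAR('k) - [:0, 1:]) z"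
    by simp
qed

lemma prod_2i: "(\<Prod>i<CHAR('k). (y - of_nat (2 * i) :: 'k)) = y ^ CHAR('k) - y"
proof -
  have "poly (\<Prod>i<CHAR('k). [:- of_nat (2 * i), 1:] :: 'k poly) y = poly (monom 1 CHAR('k) - [:0, 1:]) y"
    by (simp only: prod_2i_poly)
  then show ?thesis by (simp add: poly_prod poly_monom)
qed

lemma prod_2i_plus: "(\<Prod>i<CHAR('k). (z + of_nat (2 * i) :: 'k)) = z ^ CHAR('k) - z"
proof -
  have "(\<Prod>i<CHAR('k). (z + of_nat (2 * i) :: 'k)) = (\<Prod>i<CHAR('k). (- 1) * (- z - of_nat (2 * i)))"
    by (rule prod.cong) (auto simp: algebra_simps)
  also have "\<dots> = (- 1) ^ CHAR('k) * ((- z) ^ CHAR('k) - (- z))"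
    by (simp only: prod.distrib prod_constant card_lessThan prod_2i)
  also have "\<dots> = z ^ CHAR('k) - z"
    using odd_p by (simp add: frob_neg power_minus_odd)
  finally show ?thesis .
qed

end

lemma poly_eq_infinite:
  assumes inf: "infinite (UNIV :: 'k::field set)" and eq: "\<And>x. poly P x = poly Q x"
  shows "P = (Q :: 'k poly)"
proof -
  obtain A :: "'k set" where A: "finite A" "card A = Suc (max (degree P) (degree Q))"
    using infinite_arbitrarily_large[OF inf] by blast
  show ?thesis by (rule poly_eqI_degree[of A]) (use eq A in auto)
qed

context
  assumes pr: "prime CHAR('k::field)" and p2: "CHAR('k) > 2"
    and AC: "\<forall>q :: 'k poly. degree q > 0 \<longrightarrow> (\<exists>x. poly q x = 0)"
begin

lemma infinite_k: "infinite (UNIV :: 'k set)"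
proof
  assume fin: "finite (UNIV :: 'k set)"
  define q :: "'k poly" where "q = (\<Prod>a\<in>UNIV. [:- a, 1:]) + 1"
  have dprod: "degree (\<Prod>a\<in>(UNIV::'k set). [:- a, 1:]) = card (UNIV :: 'k set)"
    by (simp add: degree_prod_sum_eq)
  have "card (UNIV :: 'k set) > 0" using fin by (simp add: card_gt_0_iff)
  then have "degree q > 0" unfolding q_def using dprod
    by (subst degree_add_eq_left) auto
  then obtain x where "poly q x = 0" using AC by blast
  moreover have "poly (\<Prod>a\<in>(UNIV::'k set). [:- a, 1:]) x = 0"
    using fin by (auto simp: poly_prod intro!: prod_zero bexI[of _ x])
  ultimately show False by (simp add: q_def)
qed

lemma sqrt_exists: "\<exists>\<mu>::'k. \<mu> ^ 2 = x"
proof -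
  have "degree [:- x, 0, 1 :: 'k:] > 0" by simp
  then obtain \<mu> where "poly [:- x, 0, 1:] \<mu> = 0" using AC by blast
  then show ?thesis by (auto simp: power2_eq_square algebra_simps)
qed

definition gpoly :: "'k poly" where
  "gpoly = monom 1 CHAR('k) - smult 2 (monom 1 ((CHAR('k) + 1) div 2)) + monom 1 1"

lemma UI:
  assumes nu: "\<nu> ^ CHAR('k) - \<nu> = sh"
  shows "gpoly - [:sh ^ 2:] = (\<Prod>i<CHAR('k). [:- ((\<nu> + 1 + of_nat (2 * i)) ^ 2), 1:])"
proof (rule poly_eq_infinite[OF infinite_k])
  fix x :: 'k
  obtain \<mu> where mu: "\<mu> ^ 2 = x" using sqrt_exists by blast
  define Y where "Y = \<mu> - \<nu> - 1"
  define Z where "Z = \<mu> + \<nu> + 1"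
  define M where "M = \<mu> ^ CHAR('k) - \<mu>"
  have "poly (\<Prod>i<CHAR('k). [:- ((\<nu> + 1 + of_nat (2 * i)) ^ 2), 1:]) x
      = (\<Prod>i<CHAR('k). (x - (\<nu> + 1 + of_nat (2 * i)) ^ 2))"
    by (simp add: poly_prod)
  also have "\<dots> = (\<Prod>i<CHAR('k). (Y - of_nat (2 * i)) * (Z + of_nat (2 * i)))"
    by (rule prod.cong) (auto simp: Y_def Z_def mu[symmetric] power2_eq_square algebra_simps)
  also have "\<dots> = (Y ^ CHAR('k) - Y) * (Z ^ CHAR('k) - Z)"
    by (simp only: prod.distrib prod_2i[OF pr p2] prod_2i_plus[OF pr p2])
  also have "Y ^ CHAR('k) - Y = M - sh"
  proof -
    have "Y ^ CHAR('k) = \<mu> ^ CHAR('k) - \<nu> ^ CHAR('k) - 1 ^ CHAR('k)"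
      unfolding Y_def by (simp only: frob_diff[OF pr p2])
    then show ?thesis by (simp add: Y_def M_def nu[symmetric] algebra_simps)
  qed
  also have "Z ^ CHAR('k) - Z = M + sh"
  proof -
    have "Z ^ CHAR('k) = \<mu> ^ CHAR('k) + \<nu> ^ CHAR('k) + 1 ^ CHAR('k)"
      unfolding Z_def by (simp only: frob_add[OF pr p2])
    then show ?thesis by (simp add: Z_def M_def nu[symmetric] algebra_simps)
  qed
  also have "(M - sh) * (M + sh) = M ^ 2 - sh ^ 2"
    by (simp add: power2_eq_square algebra_simps)
  also have "M ^ 2 = x ^ CHAR('k) - 2 * x ^ ((CHAR('k) + 1) div 2) + x"
  proof -
    have o: "CHAR('k) + 1 = 2 * ((CHAR('k) + 1) div 2)" using odd_p[OF pr p2] by presburger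
    have "M ^ 2 = (\<mu> ^ 2) ^ CHAR('k) - 2 * \<mu> ^ (CHAR('k) + 1) + \<mu> ^ 2"
      by (simp add: M_def power2_eq_square algebra_simps power_mult_distrib
          flip: power_add power_mult)
    also have "\<mu> ^ (CHAR('k) + 1) = (\<mu> ^ 2) ^ ((CHAR('k) + 1) div 2)"
      by (subst o) (simp add: power_mult)
    finally show ?thesis by (simp add: mu)
  qed
  finally show "poly (gpoly - [:sh ^ 2:]) x = poly (\<Prod>i<CHAR('k). [:- ((\<nu> + 1 + of_nat (2 * i)) ^ 2), 1:]) x"
    by (simp add: gpoly_def poly_monom)
qed

end

context
  assumes pr: "prime CHAR('k::field)" and p2: "CHAR('k) > 2"
begin

definition XP :: "'k \<Rightarrow> 'k poly" where "XP sh = monom 1 CHAR('k) - [:0, 1:] - [:sh:]"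

lemma degree_XP: "degree (XP sh) = CHAR('k)"
proof -
  have "degree (monom (1::'k) CHAR('k) + (- [:0, 1:] - [:sh:])) = CHAR('k)"
    using p2 by (subst degree_add_eq_left) (auto simp: degree_monom_eq intro!: le_less_trans[OF degree_diff_le_max])
  then show ?thesis by (simp only: XP_def diff_conv_add_uminus add.assoc)
qed

lemma XP_root: "l0 ^ CHAR('k) - l0 = sh \<Longrightarrow> poly (XP sh) (l0 + of_nat t) = 0"
  by (simp add: XP_def poly_monom frob_add[OF pr p2] frob_of_nat[OF pr p2])

lemma poly_m1: "[:-1:] = (-1 :: 'k poly)"
  by (metis minus_pCons one_pCons minus_zero)

lemma pderiv_XP: "pderiv (XP sh) = -1"
  by (simp add: XP_def pderiv_monom pderiv_diff pderiv_pCons poly_m1)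

lemma lagrange:
  assumes hl0: "l0 ^ CHAR('k) - l0 = sh"
  defines "L \<equiv> \<lambda>t. XP sh div [:- (l0 + of_nat t), 1:]"
  shows "\<And>t. [:- (l0 + of_nat t), 1:] * L t = XP sh"
    and "(\<Sum>t<CHAR('k). L t) = -1"
proof -
  let ?nu = "\<lambda>t. l0 + of_nat t :: 'k"
  show lin: "[:- ?nu t, 1:] * L t = XP sh" for t
  proof -
    have "[:- ?nu t, 1:] dvd XP sh" by (subst poly_eq_0_iff_dvd[symmetric]) (rule XP_root[OF hl0])
    then show ?thesis unfolding L_def by (rule dvd_mult_div_cancel)
  qed
  have XP0: "XP sh \<noteq> 0" using degree_XP p2 by (metis degree_0 not_less0 gr_implies_not0)
  have degL: "degree (L t) < CHAR('k)" for t
  proof -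
    have "L t \<noteq> 0" using lin[of t] XP0 by auto
    then have "degree ([:- ?nu t, 1:] * L t) = degree [:- ?nu t, 1:] + degree (L t)"
      by (intro degree_mult_eq) auto
    then have "degree (XP sh) = 1 + degree (L t)" by (simp only: lin) simp
    then show ?thesis using degree_XP by simp
  qed
  have off: "poly (L t) (?nu s) = 0" if "s < CHAR('k)" "t < CHAR('k)" "s \<noteq> t" for s t
  proof -
    have "poly ([:- ?nu t, 1:] * L t) (?nu s) = 0" using lin[of t] XP_root[OF hl0] by simp
    moreover have "poly ([:- ?nu t, 1:] * L t) (?nu s) = (?nu s - ?nu t) * poly (L t) (?nu s)"
      by (simp add: algebra_simps)
    moreover have "?nu s - ?nu t \<noteq> 0" using that of_nat_inj_p[OF pr p2] by auto
    ultimately show ?thesis by (metis mult_eq_0_iff)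
  qed
  have diag: "poly (L t) (?nu t) = -1" for t
  proof -
    have "pderiv ([:- ?nu t, 1:] * L t) = [:- ?nu t, 1:] * pderiv (L t) + L t"
      by (simp only: pderiv_mult) (simp add: pderiv_pCons)
    then have "pderiv (XP sh) = [:- ?nu t, 1:] * pderiv (L t) + L t" by (simp only: lin)
    then have "poly (pderiv (XP sh)) (?nu t) = poly (L t) (?nu t)"
      by (simp only: poly_add poly_mult) simp
    then show ?thesis by (simp add: pderiv_XP)
  qed
  define D where "D = (\<Sum>t<CHAR('k). L t) + 1"
  have "D = 0"
  proof (rule poly_eqI_degree[where A = "?nu ` {..<CHAR('k)}"])
    have inj: "inj_on ?nu {..<CHAR('k)}"
      by (rule inj_onI) (use of_nat_inj_p[OF pr p2] in auto)
    then have card: "card (?nu ` {..<CHAR('k)}) = CHAR('k)" by (simp add: card_image)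
    have "degree D < CHAR('k)"
      unfolding D_def
      by (intro degree_add_less degree_sum_less) (use degL p2 in auto)
    then show "degree D < card (?nu ` {..<CHAR('k)})" using card by simp
    show "degree (0::'k poly) < card (?nu ` {..<CHAR('k)})" using card p2 by simp
    fix x assume "x \<in> ?nu ` {..<CHAR('k)}"
    then obtain s where s: "s < CHAR('k)" "x = ?nu s" by auto
    have "(\<Sum>t<CHAR('k). poly (L t) x) = (\<Sum>t<CHAR('k). if s = t then -1 else 0)"
      by (rule sum.cong) (use s diag off in auto)
    also have "\<dots> = -1" using s by simp
    finally show "poly D x = poly 0 x" by (simp add: D_def poly_sum)
  qed
  then show "(\<Sum>t<CHAR('k). L t) = -1" unfolding D_def by (simp add: add_eq_0_iff2)
qed

end

lemma num_comm: "x * (numeral n :: 'a::ring_1) = numeral n * x"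
  by (metis mult_of_nat_commute of_nat_numeral)
lemma num_left_comm: "x * (numeral n * y) = (numeral n :: 'a::ring_1) * (x * y)"
  by (metis mult.assoc num_comm)
lemma t2: "(2::'a::ring_1) * x = x + x" by (simp add: mult_2)
lemma t4: "(4::'a::ring_1) * x = x + x + x + x"
proof -
  have "(4::'a) * x = 2 * (2 * x)" by (simp add: mult.assoc[symmetric])
  then show ?thesis by (simp add: t2 add.assoc)
qed
lemma sqd: "(x + 1) ^ 2 - (x - 1) ^ 2 = 4 * (x::'a::ring_1)"
  by (simp add: power2_eq_square algebra_simps t4)

locale sl2q = rideal J for J :: "'k::field fx set" +
  fixes sf sh :: 'k
  assumes relsJ: "rels sf sh \<subseteq> J"
begin

abbreviation "R1 \<equiv> ee * ff - ff * ee - hh"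
abbreviation "R2 \<equiv> hh * ee - ee * hh - 2 * ee"
abbreviation "R3 \<equiv> hh * ff - ff * hh + 2 * ff"

lemma R1: "R1 \<in> J" and R2: "R2 \<in> J" and R3: "R3 \<in> J"
  and R4: "ee ^ CHAR('k) \<in> J"
  using relsJ by (auto simp: rels_def)

lemma cc_hh: "cc * hh \<approx> hh * cc"
proof (rule cg_diff_J)
  have eq: "cc * hh - hh * cc = 4 * (- (ee * R3) - R2 * ff)"
    by (simp add: cc_def algebra_simps power2_eq_square num_comm num_left_comm)
  show "cc * hh - hh * cc \<in> J" unfolding eq
    by (rule Jl) (rule Jdiff[OF Jneg[OF Jl[OF R3]] Jr[OF R2]])
qed

lemma cc_ee: "cc * ee \<approx> ee * cc"
proof (rule cg_diff_J)
  have a: "(hh - 1)^2 * ee = ee * (hh + 1)^2 + R2 * (hh + 1) + (hh - 1) * R2"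
    by (simp add: power2_eq_square algebra_simps num_comm num_left_comm t2)
  have "cc * ee - ee * cc = ((hh - 1)^2 * ee - ee * (hh - 1)^2) + 4 * (ee * (ff * ee - ee * ff))"
    by (simp add: cc_def algebra_simps num_comm num_left_comm)
  also have "\<dots> = ee * ((hh + 1)^2 - (hh - 1)^2) + R2 * (hh + 1) + (hh - 1) * R2 + 4 * (ee * (ff * ee - ee * ff))"
    by (simp add: a algebra_simps)
  also have "\<dots> = R2 * (hh + 1) + (hh - 1) * R2 - 4 * (ee * R1)"
    by (simp only: sqd) (simp add: algebra_simps num_comm num_left_comm)
  finally have eq: "cc * ee - ee * cc = R2 * (hh + 1) + (hh - 1) * R2 - 4 * (ee * R1)" .
  show "cc * ee - ee * cc \<in> J" unfolding eq
    by (rule Jdiff[OF Jadd[OF Jr[OF R2] Jl[OF R2]] Jl[OF Jl[OF R1]]])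
qed

lemma cc_alt: "cc \<approx> (hh + 1) ^ 2 + 4 * (ff * ee)"
proof (rule cg_diff_J)
  have "cc - ((hh + 1) ^ 2 + 4 * (ff * ee)) = ((hh - 1) ^ 2 - (hh + 1) ^ 2) + 4 * (ee * ff - ff * ee)"
    by (simp add: cc_def algebra_simps)
  also have "(hh - 1) ^ 2 - (hh + 1) ^ 2 = - 4 * hh"
    by (metis minus_diff_eq sqd mult_minus_left)
  finally have "cc - ((hh + 1) ^ 2 + 4 * (ff * ee)) = - 4 * hh + 4 * (ee * ff - ff * ee)" .
  also have "\<dots> = 4 * R1" by (simp add: algebra_simps)
  finally have eq: "cc - ((hh + 1) ^ 2 + 4 * (ff * ee)) = 4 * R1" .
  show "cc - ((hh + 1) ^ 2 + 4 * (ff * ee)) \<in> J" unfolding eq by (rule Jl[OF R1])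
qed

lemma hh_ee: "hh * ee \<approx> ee * (hh + 2)"
proof (rule cg_diff_J)
  have eq: "hh * ee - ee * (hh + 2) = R2" by (simp add: algebra_simps num_comm)
  show "hh * ee - ee * (hh + 2) \<in> J" unfolding eq by (rule R2)
qed

lemma sc_comm: "sc c * X = X * sc c" by (rule sc_mult_comm)

lemma hh_ee_pow: "(hh + sc t) * ee ^ j \<approx> ee ^ j * (hh + sc (t + of_nat (2 * j)))"
proof (induction j)
  case 0 then show ?case by simp
next
  case (Suc j)
  have "(hh + sc t) * ee ^ Suc j = ((hh + sc t) * ee ^ j) * ee" by (simp only: power_Suc2 mult.assoc)
  also have "\<dots> \<approx> (ee ^ j * (hh + sc (t + of_nat (2 * j)))) * ee" using Suc by (rule cg_rmul)
  also have "\<dots> = ee ^ j * (hh * ee + sc (t + of_nat (2 * j)) * ee)" by (simp add: algebra_simps)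
  also have "\<dots> \<approx> ee ^ j * (ee * (hh + 2) + sc (t + of_nat (2 * j)) * ee)"
    by (intro cg_lmul cg_add hh_ee cg_refl)
  also have "\<dots> = ee ^ j * (ee * (hh + 2 + sc (t + of_nat (2 * j))))"
    by (simp add: sc_mult_comm[of _ ee] distrib_left add.assoc)
  also have "\<dots> = ee ^ Suc j * (hh + 2 + sc (t + of_nat (2 * j)))"
    by (simp only: power_Suc2 mult.assoc)
  also have "hh + 2 + sc (t + of_nat (2 * j)) = hh + sc (t + of_nat (2 * Suc j))"
    by (simp add: sc_add sc_of_nat sc_numeral algebra_simps)
  finally show ?case .
qed

lemma hh_ee_pow2: "(hh + sc t) ^ 2 * ee ^ j \<approx> ee ^ j * (hh + sc (t + of_nat (2 * j))) ^ 2"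
proof -
  have "(hh + sc t) ^ 2 * ee ^ j = (hh + sc t) * ((hh + sc t) * ee ^ j)"
    by (simp add: power2_eq_square mult.assoc)
  also have "\<dots> \<approx> (hh + sc t) * (ee ^ j * (hh + sc (t + of_nat (2 * j))))"
    by (intro cg_lmul hh_ee_pow)
  also have "\<dots> = ((hh + sc t) * ee ^ j) * (hh + sc (t + of_nat (2 * j)))"
    by (simp add: mult.assoc)
  also have "\<dots> \<approx> (ee ^ j * (hh + sc (t + of_nat (2 * j)))) * (hh + sc (t + of_nat (2 * j)))"
    by (intro cg_rmul hh_ee_pow)
  also have "\<dots> = ee ^ j * (hh + sc (t + of_nat (2 * j))) ^ 2"
    by (simp add: power2_eq_square mult.assoc)
  finally show ?thesis .
qed

lemma eig_sq:
  assumes "hh * eps \<approx> sc \<nu> * eps"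
  shows "(hh + sc t) ^ 2 * eps \<approx> sc ((\<nu> + t) ^ 2) * eps"
proof -
  have lin: "(hh + sc t) * eps \<approx> sc (\<nu> + t) * eps"
  proof -
    have "(hh + sc t) * eps = hh * eps + sc t * eps" by (simp add: algebra_simps)
    also have "\<dots> \<approx> sc \<nu> * eps + sc t * eps" by (intro cg_add assms cg_refl)
    also have "\<dots> = sc (\<nu> + t) * eps" by (simp add: sc_add algebra_simps)
    finally show ?thesis .
  qed
  have "(hh + sc t) ^ 2 * eps = (hh + sc t) * ((hh + sc t) * eps)"
    by (simp add: power2_eq_square mult.assoc)
  also have "\<dots> \<approx> (hh + sc t) * (sc (\<nu> + t) * eps)" by (intro cg_lmul lin)
  also have "\<dots> = sc (\<nu> + t) * ((hh + sc t) * eps)"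
    by (metis mult.assoc sc_comm)
  also have "\<dots> \<approx> sc (\<nu> + t) * (sc (\<nu> + t) * eps)" by (intro cg_lmul lin)
  also have "\<dots> = sc ((\<nu> + t) ^ 2) * eps" by (simp add: power2_eq_square sc_mult mult.assoc)
  finally show ?thesis .
qed

lemma key_step:
  assumes eps_cc: "eps * cc \<approx> cc * eps" and eig: "hh * eps \<approx> sc \<nu> * eps"
  shows "ee ^ j * eps * (cc - sc ((\<nu> + 1 + of_nat (2 * j)) ^ 2)) \<approx> 4 * ff * ee ^ Suc j * eps"
proof -
  have ecc: "ee ^ j * cc \<approx> cc * ee ^ j"
    using cg_comm_power[of ee cc j] cc_ee cg_sym by blast
  have "ee ^ j * eps * cc = ee ^ j * (eps * cc)" by (simp add: mult.assoc)
  also have "\<dots> \<approx> ee ^ j * (cc * eps)" by (intro cg_lmul eps_cc)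
  also have "\<dots> = (ee ^ j * cc) * eps" by (simp add: mult.assoc)
  also have "\<dots> \<approx> (cc * ee ^ j) * eps" by (intro cg_rmul ecc)
  also have "\<dots> \<approx> (((hh + sc 1) ^ 2 + 4 * (ff * ee)) * ee ^ j) * eps"
    by (intro cg_rmul) (use cc_alt in simp)
  also have "\<dots> = ((hh + sc 1) ^ 2 * ee ^ j) * eps + 4 * ff * ee ^ Suc j * eps"
    by (simp add: algebra_simps power_Suc)
  also have "\<dots> \<approx> (ee ^ j * (hh + sc (1 + of_nat (2 * j))) ^ 2) * eps + 4 * ff * ee ^ Suc j * eps"
    by (intro cg_add cg_rmul hh_ee_pow2 cg_refl)
  also have "\<dots> = ee ^ j * ((hh + sc (1 + of_nat (2 * j))) ^ 2 * eps) + 4 * ff * ee ^ Suc j * eps"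
    by (simp add: mult.assoc)
  also have "\<dots> \<approx> ee ^ j * (sc ((\<nu> + (1 + of_nat (2 * j))) ^ 2) * eps) + 4 * ff * ee ^ Suc j * eps"
    by (intro cg_add cg_lmul eig_sq eig cg_refl)
  also have "ee ^ j * (sc ((\<nu> + (1 + of_nat (2 * j))) ^ 2) * eps) = sc ((\<nu> + 1 + of_nat (2 * j)) ^ 2) * (ee ^ j * eps)"
    by (metis sc_comm_left add.assoc)
  finally have *: "ee ^ j * eps * cc \<approx> sc ((\<nu> + 1 + of_nat (2 * j)) ^ 2) * (ee ^ j * eps) + 4 * ff * ee ^ Suc j * eps" .
  have "ee ^ j * eps * (cc - sc ((\<nu> + 1 + of_nat (2 * j)) ^ 2)) =
        ee ^ j * eps * cc - sc ((\<nu> + 1 + of_nat (2 * j)) ^ 2) * (ee ^ j * eps)"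
    by (simp add: right_diff_distrib sc_mult_comm[of _ "ee ^ j * eps"])
  also have "\<dots> \<approx> (sc ((\<nu> + 1 + of_nat (2 * j)) ^ 2) * (ee ^ j * eps) + 4 * ff * ee ^ Suc j * eps)
       - sc ((\<nu> + 1 + of_nat (2 * j)) ^ 2) * (ee ^ j * eps)"
    by (intro cg_diff * cg_refl)
  also have "\<dots> = 4 * ff * ee ^ Suc j * eps" by simp
  finally show ?thesis .
qed

end

lemma ev_sum: "ev (sum u A) X = (\<Sum>i\<in>A. ev (u i) X)"
  by (induction A rule: infinite_finite_induct) (auto simp: ev_add)

context rideal
begin
lemma cg_sum: "(\<And>i. i \<in> A \<Longrightarrow> u i \<approx> v i) \<Longrightarrow> sum u A \<approx> sum v A"
  by (induction A rule: infinite_finite_induct) (auto simp: cg_add)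
lemma cg_J_trans: "x \<approx> y \<Longrightarrow> y \<in> J \<Longrightarrow> x \<in> J"
  unfolding cg_def by (metis Jadd diff_add_cancel)
end

context sl2q
begin

lemma R6: "hh ^ CHAR('k) - hh - sc sh \<in> J"
  using relsJ by (auto simp: rels_def)

definition Xp :: "'k poly" where "Xp = monom 1 CHAR('k) - [:0, 1:] - [:sh:]"

lemma ev_Xp: "ev Xp hh \<in> J"
  using R6 by (simp add: Xp_def ev_diff ev_monom ev_pX)

lemma ev_hh_comm: "ev q hh * cc \<approx> cc * ev q hh"
proof -
  have "ev q hh * cc = (\<Sum>i\<le>degree q. sc (coeff q i) * (hh ^ i * cc))"
    by (simp add: ev_def sum_distrib_right mult.assoc)
  also have "\<dots> \<approx> (\<Sum>i\<le>degree q. sc (coeff q i) * (cc * hh ^ i))"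
  proof (rule cg_sum, rule cg_lmul)
    fix i show "hh ^ i * cc \<approx> cc * hh ^ i"
      using cg_comm_power[of hh cc i] cc_hh cg_sym by blast
  qed
  also have "\<dots> = cc * ev q hh"
    by (simp add: ev_def sum_distrib_left sc_comm_left)
  finally show ?thesis .
qed

lemma eig_L:
  assumes "[:-\<nu>, 1:] * L = Xp"
  shows "hh * ev L hh \<approx> sc \<nu> * ev L hh"
proof (rule cg_diff_J)
  have "hh * ev L hh - sc \<nu> * ev L hh = (sc (-\<nu>) + hh) * ev L hh"
    by (simp add: sc_uminus algebra_simps)
  also have "\<dots> = ev ([:-\<nu>, 1:] * L) hh"
    by (simp only: ev_mult ev_lin)
  finally have "hh * ev L hh - sc \<nu> * ev L hh = ev ([:-\<nu>, 1:] * L) hh" .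
  then show "hh * ev L hh - sc \<nu> * ev L hh \<in> J" using assms ev_Xp by simp
qed

lemma filt:
  assumes eps_cc: "eps * cc \<approx> cc * eps" and eig: "hh * eps \<approx> sc \<nu> * eps"
  shows "j \<le> CHAR('k) \<Longrightarrow>
    x * ee ^ j * eps * ev (\<Prod>i\<in>{j..<CHAR('k)}. [:- ((\<nu> + 1 + of_nat (2 * i)) ^ 2), 1:]) cc \<in> J"
proof (induction "CHAR('k) - j" arbitrary: j x)
  case 0
  then have "j = CHAR('k)" by simp
  then show ?case using Jr[OF Jr[OF Jl[OF R4, of x], of eps], of 1] by simp
next
  case (Suc m)
  then have j: "j < CHAR('k)" by simp
  let ?s = "(\<nu> + 1 + of_nat (2 * j)) ^ 2"
  let ?W = "ev (\<Prod>i\<in>{Suc j..<CHAR('k)}. [:- ((\<nu> + 1 + of_nat (2 * i)) ^ 2), 1:]) cc"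
  have prod: "(\<Prod>i\<in>{j..<CHAR('k)}. [:- ((\<nu> + 1 + of_nat (2 * i)) ^ 2), 1:]) =
      [:- ?s, 1:] * (\<Prod>i\<in>{Suc j..<CHAR('k)}. [:- ((\<nu> + 1 + of_nat (2 * i)) ^ 2), 1:])"
    using j by (simp add: prod.atLeast_Suc_lessThan)
  have "x * ee ^ j * eps * ev (\<Prod>i\<in>{j..<CHAR('k)}. [:- ((\<nu> + 1 + of_nat (2 * i)) ^ 2), 1:]) cc
      = x * (ee ^ j * eps * (cc - sc ?s)) * ?W"
  proof -
    have l: "ev [:- ?s, 1:] cc = cc - sc ?s" by (simp add: ev_lin sc_uminus)
    show ?thesis unfolding prod ev_mult l by (simp only: mult.assoc)
  qed
  also have "\<dots> \<approx> x * (4 * ff * ee ^ Suc j * eps) * ?W"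
    by (intro cg_rmul cg_lmul key_step eps_cc eig)
  also have "\<dots> = (x * 4 * ff) * ee ^ Suc j * eps * ?W"
    by (simp add: mult.assoc)
  finally have c: "x * ee ^ j * eps * ev (\<Prod>i\<in>{j..<CHAR('k)}. [:- ((\<nu> + 1 + of_nat (2 * i)) ^ 2), 1:]) cc
     \<approx> (x * 4 * ff) * ee ^ Suc j * eps * ?W" .
  have ih: "(x * 4 * ff) * ee ^ Suc j * eps * ?W \<in> J"
    using Suc.hyps(1)[of "Suc j" "x * 4 * ff"] Suc.hyps(2) j by simp
  show ?case using c ih by (rule cg_J_trans)
qed

lemma main_a:
  assumes "finite T" and sumL: "(\<Sum>t\<in>T. L t) = -1"
    and lin: "\<And>t. t \<in> T \<Longrightarrow> [:-\<nu> t, 1:] * L t = Xp"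
    and G: "\<And>t. t \<in> T \<Longrightarrow> G = (\<Prod>i<CHAR('k). [:- ((\<nu> t + 1 + of_nat (2 * i)) ^ 2), 1:])"
  shows "ev G cc \<in> J"
proof -
  have each: "ev (L t) hh * ev G cc \<in> J" if t: "t \<in> T" for t
  proof -
    have "1 * ee ^ 0 * ev (L t) hh * ev (\<Prod>i\<in>{0..<CHAR('k)}. [:- ((\<nu> t + 1 + of_nat (2 * i)) ^ 2), 1:]) cc \<in> J"
      by (rule filt[OF ev_hh_comm eig_L[OF lin[OF t]]]) simp
    moreover have "(\<Prod>i\<in>{0..<CHAR('k)}. [:- ((\<nu> t + 1 + of_nat (2 * i)) ^ 2), 1:]) = G"
      using G[OF t] by (simp only: atLeast0LessThan)
    ultimately show ?thesis by (simp only: mult_1_left power_0)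
  qed
  have "ev G cc = - (ev (\<Sum>t\<in>T. L t) hh * ev G cc)"
    by (simp add: sumL ev_uminus)
  also have "\<dots> = - (\<Sum>t\<in>T. ev (L t) hh * ev G cc)"
    by (simp add: ev_sum sum_distrib_right)
  finally have eq: "ev G cc = - (\<Sum>t\<in>T. ev (L t) hh * ev G cc)" .
  have "- (\<Sum>t\<in>T. ev (L t) hh * ev G cc) \<in> J" by (rule Jneg, rule Jsum, rule each)
  then show ?thesis by (simp only: eq[symmetric])
qed

end

type_synonym 'k vec = "nat \<times> nat \<Rightarrow> 'k"

declare plus_fun_apply[simp del] zero_fun_apply[simp del] minus_apply[simp del] uminus_apply[simp del]

definition smv :: "'k::field \<Rightarrow> 'k vec \<Rightarrow> 'k vec" where "smv c v = (\<lambda>x. c * v x)"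

lemma smv_app: "smv c v x = c * v x" by (simp add: smv_def)

lemmas vapp = plus_fun_apply zero_fun_apply minus_apply uminus_apply smv_app

lemma sum_app: "(sum u A :: 'k::field vec) x = (\<Sum>i\<in>A. u i x)"
  by (induction A rule: infinite_finite_induct) (auto simp: vapp)

definition inB :: "'k::field itself \<Rightarrow> nat \<times> nat \<Rightarrow> bool" where
  "inB T x \<longleftrightarrow> fst x < CHAR('k) \<and> snd x < CHAR('k)"

definition proj :: "'k::field vec \<Rightarrow> 'k vec" where
  "proj v x = (if inB TYPE('k) x then v x else 0)"

definition opE :: "'k::field \<Rightarrow> 'k vec \<Rightarrow> 'k vec" where
  "opE lam v x = (case x of (a, i) \<Rightarrow> if inB TYPE('k) (a, i) then
     (if 0 < i then v (a, i - 1) else 0) +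
     (if a + 1 < CHAR('k) then of_nat (a + 1) * (lam + of_nat (2 * i) - of_nat (a + 1) + 1) * v (a + 1, i) else 0)
     else 0)"

definition opF :: "'k::field \<Rightarrow> 'k vec \<Rightarrow> 'k vec" where
  "opF sf v x = (case x of (a, i) \<Rightarrow> if inB TYPE('k) (a, i) then
     (if 0 < a then v (a - 1, i) else sf * v (CHAR('k) - 1, i)) else 0)"

definition wt :: "'k::field \<Rightarrow> nat \<Rightarrow> nat \<Rightarrow> 'k" where
  "wt lam a i = lam + of_nat (2 * i) - of_nat (2 * a)"

definition opH :: "'k::field \<Rightarrow> 'k vec \<Rightarrow> 'k vec" where
  "opH lam v x = (case x of (a, i) \<Rightarrow> if inB TYPE('k) (a, i) then wt lam a i * v (a, i) else 0)"

lemma opE_app: "opE lam v (a, i) = (if inB TYPE('k) (a, i) then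
     (if 0 < i then v (a, i - 1) else 0) +
     (if a + 1 < CHAR('k) then of_nat (a + 1) * (lam + of_nat (2 * i) - of_nat (a + 1) + 1) * v (a + 1, i) else 0)
     else (0::'k::field))"
  by (simp add: opE_def)
lemma opF_app: "opF sf v (a, i) = (if inB TYPE('k) (a, i) then
     (if 0 < a then v (a - 1, i) else sf * v (CHAR('k) - 1, i)) else (0::'k::field))"
  by (simp add: opF_def)
lemma opH_app: "opH lam v (a, i) = (if inB TYPE('k) (a, i) then wt lam a i * v (a, i) else (0::'k::field))"
  by (simp add: opH_def)

lemma inB_simp: "inB TYPE('k::field) (a, i) \<longleftrightarrow> a < CHAR('k) \<and> i < CHAR('k)"
  by (simp add: inB_def)

lemmas op_apps = opE_app opF_app opH_app inB_simp

lemma opE_add: "opE lam (u + v) = opE lam u + opE lam v"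
  by (auto simp: fun_eq_iff op_apps vapp algebra_simps)
lemma opF_add: "opF sf (u + v) = opF sf u + opF sf v"
  by (auto simp: fun_eq_iff op_apps vapp algebra_simps)
lemma opH_add: "opH lam (u + v) = opH lam u + opH lam v"
  by (auto simp: fun_eq_iff op_apps vapp algebra_simps)
lemma opE_smv: "opE lam (smv c u) = smv c (opE lam u)"
  by (auto simp: fun_eq_iff op_apps vapp algebra_simps)
lemma opF_smv: "opF sf (smv c u) = smv c (opF sf u)"
  by (auto simp: fun_eq_iff op_apps vapp algebra_simps)
lemma opH_smv: "opH lam (smv c u) = smv c (opH lam u)"
  by (auto simp: fun_eq_iff op_apps vapp algebra_simps)
lemma opE_proj: "opE lam (proj u) = opE lam u"
  by (auto simp: fun_eq_iff op_apps proj_def inB_def vapp)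
lemma opF_proj: "opF sf (proj u) = opF sf u"
  by (auto simp: fun_eq_iff op_apps proj_def inB_def vapp)
lemma opH_proj: "opH lam (proj u) = opH lam u"
  by (auto simp: fun_eq_iff op_apps proj_def inB_def vapp)
lemma proj_opE: "proj (opE lam u) = opE lam u"
  by (auto simp: fun_eq_iff op_apps proj_def inB_def vapp)
lemma proj_opF: "proj (opF sf u) = opF sf u"
  by (auto simp: fun_eq_iff op_apps proj_def inB_def vapp)
lemma proj_opH: "proj (opH lam u) = opH lam u"
  by (auto simp: fun_eq_iff op_apps proj_def inB_def vapp)
lemma proj_add: "proj (u + v) = proj u + proj v"
  by (auto simp: fun_eq_iff proj_def vapp)
lemma proj_smv: "proj (smv c u) = smv c (proj u)"
  by (auto simp: fun_eq_iff proj_def vapp)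
lemma proj_proj: "proj (proj u) = proj u"
  by (auto simp: fun_eq_iff proj_def)

definition gop :: "'k::field \<Rightarrow> 'k \<Rightarrow> gen \<Rightarrow> 'k vec \<Rightarrow> 'k vec" where
  "gop lam sf g = (case g of E \<Rightarrow> opE lam | F \<Rightarrow> opF sf | H \<Rightarrow> opH lam)"

lemma gop_add: "gop lam sf g (u + v) = gop lam sf g u + gop lam sf g v"
  by (cases g) (auto simp: gop_def opE_add opF_add opH_add)
lemma gop_smv: "gop lam sf g (smv c u) = smv c (gop lam sf g u)"
  by (cases g) (auto simp: gop_def opE_smv opF_smv opH_smv)
lemma gop_proj: "gop lam sf g (proj u) = gop lam sf g u"
  by (cases g) (auto simp: gop_def opE_proj opF_proj opH_proj)
lemma proj_gop: "proj (gop lam sf g u) = gop lam sf g u"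
  by (cases g) (auto simp: gop_def proj_opE proj_opF proj_opH)

primrec awl :: "'k::field \<Rightarrow> 'k \<Rightarrow> gen list \<Rightarrow> 'k vec \<Rightarrow> 'k vec" where
  "awl lam sf [] = proj"
| "awl lam sf (g # w) = gop lam sf g \<circ> awl lam sf w"

definition aw :: "'k::field \<Rightarrow> 'k \<Rightarrow> wd \<Rightarrow> 'k vec \<Rightarrow> 'k vec" where
  "aw lam sf w = awl lam sf (unwd w)"

lemma awl_add: "awl lam sf w (u + v) = awl lam sf w u + awl lam sf w v"
  by (induction w) (auto simp: proj_add gop_add)
lemma awl_smv: "awl lam sf w (smv c u) = smv c (awl lam sf w u)"
  by (induction w) (auto simp: proj_smv gop_smv)
lemma proj_awl: "proj (awl lam sf w u) = awl lam sf w u"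
  by (cases w) (auto simp: proj_proj proj_gop)
lemma awl_append: "awl lam sf (w1 @ w2) u = awl lam sf w1 (awl lam sf w2 u)"
  by (induction w1) (auto simp: proj_awl)
lemma awl_zero: "awl lam sf w 0 = 0"
  using awl_smv[of lam sf w 0 0] by (simp add: smv_def fun_eq_iff zero_fun_def)

definition act :: "'k::field \<Rightarrow> 'k \<Rightarrow> 'k fx \<Rightarrow> 'k vec \<Rightarrow> 'k vec" where
  "act lam sf X v = (\<Sum>w\<in>Poly_Mapping.keys X. smv (Poly_Mapping.lookup X w) (aw lam sf w v))"

lemma act_superset: "finite S \<Longrightarrow> Poly_Mapping.keys X \<subseteq> S \<Longrightarrow>
    act lam sf X v = (\<Sum>w\<in>S. smv (Poly_Mapping.lookup X w) (aw lam sf w v))"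
  unfolding act_def
  by (rule sum.mono_neutral_left) (auto simp: in_keys_iff smv_def fun_eq_iff zero_fun_def)

lemma smv_add: "smv (a + b) u = smv a u + smv b u" by (simp add: vapp fun_eq_iff algebra_simps)
lemma smv_add2: "smv a (u + v) = smv a u + smv a v" by (simp add: vapp fun_eq_iff algebra_simps)
lemma smv_smv: "smv a (smv b u) = smv (a * b) u" by (simp add: smv_def fun_eq_iff)
lemma smv_zero[simp]: "smv 0 u = 0" by (simp add: vapp fun_eq_iff)
lemma smv_zero2[simp]: "smv a 0 = 0" by (simp add: vapp fun_eq_iff)
lemma smv_one[simp]: "smv 1 u = u" by (simp add: smv_def fun_eq_iff)
lemma smv_sum: "smv a (sum u A) = (\<Sum>i\<in>A. smv a (u i))"
  by (induction A rule: infinite_finite_induct) (auto simp: smv_add2)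

lemma act_add: "act lam sf (X + Y) v = act lam sf X v + act lam sf Y v"
proof -
  let ?S = "Poly_Mapping.keys X \<union> Poly_Mapping.keys Y"
  have "act lam sf (X + Y) v = (\<Sum>w\<in>?S. smv (Poly_Mapping.lookup (X + Y) w) (aw lam sf w v))"
    by (rule act_superset) (auto simp: keys_add)
  also have "\<dots> = (\<Sum>w\<in>?S. smv (Poly_Mapping.lookup X w) (aw lam sf w v)) + (\<Sum>w\<in>?S. smv (Poly_Mapping.lookup Y w) (aw lam sf w v))"
    by (simp add: lookup_add smv_add sum.distrib)
  also have "\<dots> = act lam sf X v + act lam sf Y v"
    by (simp add: act_superset[of "Poly_Mapping.keys X \<union> Poly_Mapping.keys Y"])
  finally show ?thesis .
qed

lemma act_single: "act lam sf (Poly_Mapping.single w c) v = smv c (aw lam sf w v)"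
  by (subst act_superset[of "{w}"]) auto

lemma act_zero[simp]: "act lam sf 0 v = 0" by (simp add: act_def)

lemma act_lin_add: "act lam sf X (u + v) = act lam sf X u + act lam sf X v"
  by (simp add: act_def aw_def awl_add smv_add2 sum.distrib)
lemma act_lin_smv: "act lam sf X (smv c u) = smv c (act lam sf X u)"
  by (simp add: act_def aw_def awl_smv smv_smv smv_sum mult.commute)
lemma act_lin_zero: "act lam sf X 0 = 0"
  using act_lin_smv[of lam sf X 0 0] by simp

lemma aw_plus: "aw lam sf (a + b) u = aw lam sf a (aw lam sf b u)"
  by (cases a, cases b) (simp add: aw_def awl_append)

lemma act_mult: "act lam sf (X * Y) v = act lam sf X (act lam sf Y v)"
proof (induction X rule: fx_induct)
  case zero then show ?case by simp
next
  case (single_add a b f)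
  have "act lam sf (Poly_Mapping.single a b * Y) v = act lam sf (Poly_Mapping.single a b) (act lam sf Y v)"
  proof (induction Y rule: fx_induct)
    case zero then show ?case by (simp add: act_lin_zero)
  next
    case (single_add c d g)
    have "act lam sf (Poly_Mapping.single a b * Poly_Mapping.single c d) v =
        act lam sf (Poly_Mapping.single a b) (act lam sf (Poly_Mapping.single c d) v)"
      by (simp add: mult_single act_single aw_plus awl_smv smv_smv) (simp add: aw_def awl_smv smv_smv)
    then show ?case using single_add
      by (simp add: distrib_left act_add act_lin_add)
  qed
  then show ?case using single_add by (simp add: distrib_right act_add)
qed

lemma act_one: "act lam sf 1 v = proj v"
  by (simp add: act_single aw_def zero_Wd flip: single_one)

lemma act_gn: "act lam sf (gn g) v = gop lam sf g v"
  by (simp add: gn_def act_single aw_def gop_proj)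

lemma act_sc: "act lam sf (sc c) v = smv c (proj v)"
  by (simp add: sc_def act_single aw_def zero_Wd)

lemma act_uminus: "act lam sf (- X) v = - act lam sf X v"
proof -
  have "act lam sf X v + act lam sf (- X) v = 0" using act_add[of lam sf X "- X" v] by simp
  then have "act lam sf (- X) v + act lam sf X v = 0" by (simp only: add.commute)
  then show ?thesis by (simp only: eq_neg_iff_add_eq_0)
qed

lemma act_diff: "act lam sf (X - Y) v = act lam sf X v - act lam sf Y v"
  by (simp only: diff_conv_add_uminus act_add act_uminus)

lemma proj_zero: "proj 0 = 0" by (simp add: proj_def fun_eq_iff vapp)

lemma proj_sum: "proj (sum u A) = (\<Sum>i\<in>A. proj (u i))"
  by (induction A rule: infinite_finite_induct) (auto simp: proj_add proj_zero)

lemma proj_act: "proj (act lam sf X v) = act lam sf X v"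
proof -
  have "proj (act lam sf X v) = (\<Sum>w\<in>Poly_Mapping.keys X. proj (smv (Poly_Mapping.lookup X w) (aw lam sf w v)))"
    unfolding act_def by (rule proj_sum)
  also have "\<dots> = act lam sf X v" by (simp add: act_def proj_smv aw_def proj_awl)
  finally show ?thesis .
qed

lemma act_proj: "act lam sf X (proj v) = act lam sf X v"
proof -
  have "awl lam sf w (proj v) = awl lam sf w v" for w
    by (induction w) (auto simp: proj_proj)
  then show ?thesis by (simp add: act_def aw_def)
qed

lemma act_pow: "act lam sf (X ^ n) v = (act lam sf X ^^ n) (proj v)"
  by (induction n) (auto simp: act_one act_mult)

lemma of_nat_pm1: "a + 1 = CHAR('k::field) \<Longrightarrow> (of_nat a :: 'k) = -1"
proof -
  assume "a + 1 = CHAR('k)"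
  then have "(of_nat a :: 'k) + 1 = 0" by (metis of_nat_CHAR of_nat_Suc Suc_eq_plus1 add.commute)
  then show ?thesis by (simp add: eq_neg_iff_add_eq_0)
qed

locale rep =
  fixes lam sf :: "'k::field"
  assumes pr: "prime CHAR('k)" and p2: "CHAR('k) > 2"
begin

abbreviation "EE \<equiv> opE lam"
abbreviation "FF \<equiv> opF sf"
abbreviation "HH \<equiv> opH lam"

lemma rel1: "EE (FF v) = FF (EE v) + HH v"
proof (rule ext, clarify)
  fix a i
  show "EE (FF v) (a, i) = (FF (EE v) + HH v) (a, i)"
  proof (cases "a < CHAR('k) \<and> i < CHAR('k)")
    case False then show ?thesis by (auto simp: op_apps vapp)
  next
    case True
    then have ai: "a < CHAR('k)" "i < CHAR('k)" by auto
    consider (z) "a = 0" | (m) "0 < a" "a + 1 < CHAR('k)" | (l) "a + 1 = CHAR('k)" "0 < a"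
      using ai p2 by linarith
    then show ?thesis
    proof cases
      case z then show ?thesis using ai p2 by (auto simp: op_apps vapp wt_def algebra_simps)
    next
      case m then show ?thesis using ai by (auto simp: op_apps vapp wt_def algebra_simps of_nat_diff)
    next
      case l
      have "(of_nat a :: 'k) = -1" using l by (intro of_nat_pm1) simp
      then show ?thesis using ai l by (auto simp: op_apps vapp wt_def algebra_simps)
    qed
  qed
qed

lemma rel2: "HH (EE v) = EE (HH v) + smv 2 (EE v)"
  by (rule ext, clarify) (auto simp: op_apps vapp wt_def algebra_simps of_nat_diff)

lemma rel3: "HH (FF v) = FF (HH v) - smv 2 (FF v)"
proof (rule ext, clarify)
  fix a i
  show "HH (FF v) (a, i) = (FF (HH v) - smv 2 (FF v)) (a, i)"
  proof (cases "a < CHAR('k) \<and> i < CHAR('k)")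
    case False then show ?thesis by (auto simp: op_apps vapp)
  next
    case True
    then have ai: "a < CHAR('k)" "i < CHAR('k)" by auto
    show ?thesis
    proof (cases "a = 0")
      case True
      have "(of_nat (CHAR('k) - 1) :: 'k) = -1" using p2 by (intro of_nat_pm1) simp
      then show ?thesis using ai True p2 by (auto simp: op_apps vapp wt_def algebra_simps)
    next
      case False then show ?thesis using ai by (auto simp: op_apps vapp wt_def algebra_simps of_nat_diff)
    qed
  qed
qed


lemma EEn_add: "(EE ^^ n) (u + v) = (EE ^^ n) u + (EE ^^ n) v"
  by (induction n) (auto simp: opE_add)
lemma EEn_smv: "(EE ^^ n) (smv c u) = smv c ((EE ^^ n) u)"
  by (induction n) (auto simp: opE_smv)
lemma EE_zero: "EE 0 = 0" using opE_smv[of lam 0 0] by simp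
lemma EEn_zero: "(EE ^^ n) 0 = 0" by (induction n) (auto simp: EE_zero)
lemma EEn_sum: "(EE ^^ n) (sum u A) = (\<Sum>i\<in>A. (EE ^^ n) (u i))"
  by (induction A rule: infinite_finite_induct) (auto simp: EEn_add EEn_zero)

lemma HH_EEn: "HH ((EE ^^ n) v) = (EE ^^ n) (HH v) + smv (of_nat (2 * n)) ((EE ^^ n) v)"
proof (induction n)
  case 0 then show ?case by simp
next
  case (Suc n)
  have "HH ((EE ^^ Suc n) v) = EE (HH ((EE ^^ n) v)) + smv 2 (EE ((EE ^^ n) v))"
    by (simp add: rel2)
  also have "\<dots> = EE ((EE ^^ n) (HH v)) + smv (of_nat (2 * n)) (EE ((EE ^^ n) v)) + smv 2 (EE ((EE ^^ n) v))"
    by (simp add: Suc opE_add opE_smv)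
  also have "\<dots> = (EE ^^ Suc n) (HH v) + smv (of_nat (2 * Suc n)) ((EE ^^ Suc n) v)"
    by (simp add: fun_eq_iff vapp algebra_simps)
  finally show ?case .
qed

lemma EEn_FF: "(EE ^^ Suc n) (FF v) = FF ((EE ^^ Suc n) v) + smv (of_nat (Suc n)) ((EE ^^ n) (HH v))
    + smv (of_nat (Suc n * n)) ((EE ^^ n) v)"
proof (induction n)
  case 0 then show ?case by (simp add: rel1)
next
  case (Suc n)
  have "(EE ^^ Suc (Suc n)) (FF v) = EE ((EE ^^ Suc n) (FF v))" by simp
  also have "\<dots> = EE (FF ((EE ^^ Suc n) v)) + smv (of_nat (Suc n)) ((EE ^^ Suc n) (HH v))
      + smv (of_nat (Suc n * n)) ((EE ^^ Suc n) v)"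
    by (simp only: Suc opE_add opE_smv) simp
  also have "EE (FF ((EE ^^ Suc n) v)) = FF ((EE ^^ Suc (Suc n)) v) + HH ((EE ^^ Suc n) v)"
    by (simp add: rel1)
  also have "HH ((EE ^^ Suc n) v) = (EE ^^ Suc n) (HH v) + smv (of_nat (2 * Suc n)) ((EE ^^ Suc n) v)"
    by (rule HH_EEn)
  finally show ?case by (simp add: fun_eq_iff vapp algebra_simps)
qed

lemma EEp_FF: "(EE ^^ CHAR('k)) (FF v) = FF ((EE ^^ CHAR('k)) v)"
proof -
  obtain n where n: "CHAR('k) = Suc n" using p2 by (cases "CHAR('k)") auto
  have "(EE ^^ CHAR('k)) (FF v) = FF ((EE ^^ CHAR('k)) v) + smv (of_nat (CHAR('k))) ((EE ^^ n) (HH v))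
    + smv (of_nat (CHAR('k) * n)) ((EE ^^ n) v)"
    using EEn_FF[of n v] by (simp only: n)
  then show ?thesis by simp
qed

lemma EEp_FFa: "(EE ^^ CHAR('k)) ((FF ^^ a) v) = (FF ^^ a) ((EE ^^ CHAR('k)) v)"
  by (induction a) (auto simp: EEp_FF)

definition dl :: "nat \<times> nat \<Rightarrow> 'k vec" where "dl b = (\<lambda>x. if x = b then 1 else 0)"

lemma EE_dl0: "EE (dl (0, i)) = (if i + 1 < CHAR('k) then dl (0, i + 1) else 0)"
  by (rule ext, clarify) (auto simp: op_apps vapp dl_def)

lemma EEn_dl0: "i < CHAR('k) \<Longrightarrow> (EE ^^ n) (dl (0, i)) = (if i + n < CHAR('k) then dl (0, i + n) else 0)"
  by (induction n) (auto simp: EE_dl0 EE_zero)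

lemma FF_dl: "a + 1 < CHAR('k) \<Longrightarrow> i < CHAR('k) \<Longrightarrow> FF (dl (a, i)) = dl (a + 1, i)"
  by (rule ext, clarify) (auto simp: op_apps vapp dl_def)

lemma FFa_dl0: "a < CHAR('k) \<Longrightarrow> i < CHAR('k) \<Longrightarrow> (FF ^^ a) (dl (0, i)) = dl (a, i)"
  by (induction a) (auto simp: FF_dl)

lemma EEp_dl: "a < CHAR('k) \<Longrightarrow> i < CHAR('k) \<Longrightarrow> (EE ^^ CHAR('k)) (dl (a, i)) = 0"
proof -
  assume ai: "a < CHAR('k)" "i < CHAR('k)"
  have "(EE ^^ CHAR('k)) (dl (a, i)) = (EE ^^ CHAR('k)) ((FF ^^ a) (dl (0, i)))"
    using ai by (simp add: FFa_dl0)
  also have "\<dots> = (FF ^^ a) ((EE ^^ CHAR('k)) (dl (0, i)))" by (rule EEp_FFa)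
  also have "(EE ^^ CHAR('k)) (dl (0, i)) = 0" using ai by (simp add: EEn_dl0)
  also have "(FF ^^ a) 0 = 0"
  proof -
    have "FF 0 = 0" using opF_smv[of sf 0 0] by simp
    then show ?thesis by (induction a) auto
  qed
  finally show ?thesis .
qed

definition BB :: "(nat \<times> nat) set" where "BB = {..<CHAR('k)} \<times> {..<CHAR('k)}"

lemma proj_decomp: "proj v = (\<Sum>b\<in>BB. smv (v b) (dl b))"
proof (rule ext)
  fix x
  have "(\<Sum>b\<in>BB. smv (v b) (dl b)) x = (\<Sum>b\<in>BB. if b = x then v x else 0)"
    by (simp add: sum_app smv_app dl_def) (rule sum.cong, auto)
  also have "\<dots> = proj v x" by (simp add: proj_def BB_def inB_def mem_Times_iff)
  finally show "proj v x = (\<Sum>b\<in>BB. smv (v b) (dl b)) x" by simp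
qed

lemma EEp_zero: "(EE ^^ CHAR('k)) (proj v) = 0"
  by (simp add: proj_decomp EEn_sum EEn_smv) (rule sum.neutral, auto simp: BB_def EEp_dl)

lemma FFn: "proj u = u \<Longrightarrow> n \<le> CHAR('k) \<Longrightarrow> (FF ^^ n) u (a, i) =
   (if a < CHAR('k) \<and> i < CHAR('k) then (if n \<le> a then u (a - n, i) else sf * u (a + CHAR('k) - n, i)) else 0)"
proof (induction n arbitrary: a i)
  case 0 then show ?case by (auto simp: proj_def inB_def dest: fun_cong[of _ _ "(a, i)"])
next
  case (Suc n)
  then show ?case by (auto simp: op_apps)
qed

lemma FFp: "(FF ^^ CHAR('k)) (proj v) = smv sf (proj v)"
proof (rule ext, clarify)
  fix a i
  show "(FF ^^ CHAR('k)) (proj v) (a, i) = smv sf (proj v) (a, i)"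
    by (subst FFn) (auto simp: proj_proj proj_def inB_def smv_app)
qed

lemma HHn: "proj u = u \<Longrightarrow> (HH ^^ n) u (a, i) = wt lam a i ^ n * u (a, i)"
proof (induction n arbitrary: a i)
  case 0 then show ?case by simp
next
  case (Suc n)
  have "u (a, i) = 0" if "\<not> (a < CHAR('k) \<and> i < CHAR('k))"
    using Suc.prems that by (auto simp: proj_def inB_def dest: fun_cong[of _ _ "(a, i)"])
  then show ?case using Suc by (auto simp: op_apps)
qed

lemma wt_frob: "wt lam a i ^ CHAR('k) - wt lam a i = lam ^ CHAR('k) - lam"
proof -
  have fi: "(of_nat (2 * i) :: 'k) ^ CHAR('k) = of_nat (2 * i)" by (rule frob_of_nat[OF pr p2])
  have fa: "(of_nat (2 * a) :: 'k) ^ CHAR('k) = of_nat (2 * a)" by (rule frob_of_nat[OF pr p2])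
  have "wt lam a i ^ CHAR('k) = lam ^ CHAR('k) + of_nat (2 * i) - of_nat (2 * a)"
    unfolding wt_def by (simp only: frob_diff[OF pr p2] frob_add[OF pr p2] fi fa)
  then show ?thesis by (simp add: wt_def)
qed

lemma HHp: "(HH ^^ CHAR('k)) (proj v) - HH (proj v) - smv (lam ^ CHAR('k) - lam) (proj v) = 0"
proof (rule ext, clarify)
  fix a i
  have "(HH ^^ CHAR('k)) (proj v) (a, i) = wt lam a i ^ CHAR('k) * proj v (a, i)"
    by (rule HHn) (simp add: proj_proj)
  moreover have "HH (proj v) (a, i) = wt lam a i * proj v (a, i)"
    by (auto simp: op_apps proj_def inB_def)
  ultimately have "((HH ^^ CHAR('k)) (proj v) - HH (proj v) - smv (lam ^ CHAR('k) - lam) (proj v)) (a, i)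
      = (wt lam a i ^ CHAR('k) - wt lam a i - (lam ^ CHAR('k) - lam)) * proj v (a, i)"
    by (simp add: vapp algebra_simps)
  then show "((HH ^^ CHAR('k)) (proj v) - HH (proj v) - smv (lam ^ CHAR('k) - lam) (proj v)) (a, i) = 0 (a, i)"
    using wt_frob[of a i] by (simp add: vapp)
qed

end

lemma act_num: "act lam sf (numeral n) u = smv (numeral n) (proj u)"
  by (metis act_sc sc_numeral)

lemma act_sum: "act lam sf (sum u A) v = (\<Sum>i\<in>A. act lam sf (u i) v)"
  by (induction A rule: infinite_finite_induct) (auto simp: act_add)

lemma act_vsum: "act lam sf X (sum u A) = (\<Sum>i\<in>A. act lam sf X (u i))"
  by (induction A rule: infinite_finite_induct) (auto simp: act_lin_add act_lin_zero)

lemma act_scmult: "act lam sf (sc c * X) v = smv c (act lam sf X v)"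
  by (simp add: act_mult act_sc proj_act)

lemma act_gnE: "act lam sf (gn E) = opE lam" by (rule ext) (simp add: act_gn gop_def)
lemma act_gnF: "act lam sf (gn F) = opF sf" by (rule ext) (simp add: act_gn gop_def)
lemma act_gnH: "act lam sf (gn H) = opH lam" by (rule ext) (simp add: act_gn gop_def)

context rep
begin

lemma act_rels: "r \<in> rels sf (lam ^ CHAR('k) - lam) \<Longrightarrow> act lam sf r v = 0"
  unfolding rels_def
  apply (auto simp: act_diff act_add act_mult act_gnE act_gnF act_gnH act_num proj_opE proj_opF
      act_pow act_sc EEp_zero FFp HHp)
    apply (simp add: rel1)
   apply (simp add: rel2)
   apply (simp add: rel3)
  apply (metis HHp opH_proj eq_iff_diff_eq_0)
  done

lemma ideal_act: "x \<in> fa_ideal (red_rels sf (lam ^ CHAR('k) - lam)) \<Longrightarrow>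
    \<exists>X. Psi X = x \<and> (\<forall>v. act lam sf X v = 0)"
proof (induction rule: fa_ideal.induct)
  case zero then show ?case by (intro exI[of _ 0]) (simp add: Psi_zero)
next
  case (rel r)
  then obtain X where "X \<in> rels sf (lam ^ CHAR('k) - lam)" "r = Psi X"
    using Psi_rels by blast
  then show ?case using act_rels by blast
next
  case (add x y)
  then obtain X Y where "Psi X = x" "\<forall>v. act lam sf X v = 0" "Psi Y = y" "\<forall>v. act lam sf Y v = 0" by blast
  then show ?case by (intro exI[of _ "X + Y"]) (simp add: Psi_add act_add)
next
  case (smult x c)
  then obtain X where "Psi X = x" "\<forall>v. act lam sf X v = 0" by blast
  then show ?case by (intro exI[of _ "sc c * X"]) (simp add: Psi_smult act_scmult)
next
  case (lmult x g)
  then obtain X where "Psi X = x" "\<forall>v. act lam sf X v = 0" by blast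
  then show ?case by (intro exI[of _ "gn g * X"]) (simp add: Psi_mult Psi_gn act_mult act_lin_zero)
next
  case (rmult x g)
  then obtain X where "Psi X = x" "\<forall>v. act lam sf X v = 0" by blast
  then show ?case by (intro exI[of _ "X * gn g"]) (simp add: Psi_mult Psi_gn act_mult)
qed

lemma act_JJ: "X \<in> JJ sf (lam ^ CHAR('k) - lam) \<Longrightarrow> act lam sf X v = 0"
proof -
  assume "X \<in> JJ sf (lam ^ CHAR('k) - lam)"
  then obtain Y where "Psi Y = Psi X" "\<forall>v. act lam sf Y v = 0"
    unfolding JJ_def using ideal_act by blast
  then show ?thesis using Psi_inj by metis
qed

end

context rep
begin

definition sv :: "nat \<Rightarrow> 'k" where "sv j = (lam + 1 + of_nat (2 * j)) ^ 2"

abbreviation "TT \<equiv> act lam sf cc"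

lemma four_nz: "(4::'k) \<noteq> 0"
proof
  assume "(4::'k) = 0"
  then have "(of_nat 4 :: 'k) = 0" by simp
  then have "CHAR('k) dvd 4" by (simp only: of_nat_eq_0_iff_char_dvd)
  then have "CHAR('k) \<le> 4" by (rule dvd_imp_le) simp
  then have "CHAR('k) = 3 \<or> CHAR('k) = 4" using p2 by auto
  then show False using \<open>CHAR('k) dvd 4\<close> pr by auto
qed

lemma EE_dl: "EE (dl (a, i)) = (if i + 1 < CHAR('k) \<and> a < CHAR('k) then dl (a, i + 1) else 0) +
    (if 0 < a \<and> a < CHAR('k) \<and> i < CHAR('k) then smv (of_nat a * (lam + of_nat (2 * i) - of_nat a + 1)) (dl (a - 1, i)) else 0)"
  by (rule ext, clarify) (auto simp: op_apps vapp dl_def)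

lemma FF_dl_last: "i < CHAR('k) \<Longrightarrow> FF (dl (CHAR('k) - 1, i)) = smv sf (dl (0, i))"
  using p2 by (intro ext, clarify) (auto simp: op_apps vapp dl_def)

lemma HH_dl: "j < CHAR('k) \<Longrightarrow> HH (dl (j, j)) = smv lam (dl (j, j))"
  by (rule ext, clarify) (auto simp: op_apps vapp dl_def wt_def)

lemma proj_dl: "a < CHAR('k) \<Longrightarrow> i < CHAR('k) \<Longrightarrow> proj (dl (a, i)) = dl (a, i)"
  by (auto simp: fun_eq_iff proj_def inB_def dl_def)

lemma EF_djj: "j < CHAR('k) \<Longrightarrow> EE (FF (dl (j, j))) =
   (if j + 1 < CHAR('k) then dl (j + 1, j + 1) + smv (of_nat (j + 1) * (lam + of_nat j)) (dl (j, j)) else 0)"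
proof -
  assume j: "j < CHAR('k)"
  show ?thesis
  proof (cases "j + 1 < CHAR('k)")
    case True
    then have "FF (dl (j, j)) = dl (j + 1, j)" using j by (simp add: FF_dl)
    moreover have "(of_nat (Suc j) :: 'k) * (lam + of_nat (2 * j) - of_nat (Suc j) + 1) = of_nat (j + 1) * (lam + of_nat j)"
      by (simp add: algebra_simps)
    ultimately show ?thesis using True by (simp add: EE_dl, simp add: algebra_simps)
  next
    case False
    then have jj: "j = CHAR('k) - 1" using j by simp
    have "FF (dl (j, j)) = smv sf (dl (0, j))"
      by (simp only: jj) (rule FF_dl_last, use j jj in simp)
    then show ?thesis using False j by (simp add: opE_smv EE_dl0)
  qed
qed

lemma act_hm1: "act lam sf (hh - 1) u = HH u - proj u"
  by (simp add: act_diff act_gnH act_one)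

lemma T_djj: "j < CHAR('k) \<Longrightarrow> TT (dl (j, j)) = smv (sv j) (dl (j, j)) +
    (if j + 1 < CHAR('k) then smv 4 (dl (j + 1, j + 1)) else 0)"
proof -
  assume j: "j < CHAR('k)"
  have h1: "act lam sf (hh - 1) (dl (j, j)) = smv (lam - 1) (dl (j, j))"
    using j by (simp add: act_hm1 HH_dl proj_dl fun_eq_iff vapp algebra_simps)
  have h2: "act lam sf ((hh - 1) ^ 2) (dl (j, j)) = smv ((lam - 1) ^ 2) (dl (j, j))"
    by (simp add: power2_eq_square act_mult h1 act_lin_smv smv_smv)
  have h3: "act lam sf (4 * (ee * ff)) (dl (j, j)) = smv 4 (EE (FF (dl (j, j))))"
    using j by (simp add: act_mult act_num act_gnE act_gnF proj_opE proj_dl)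
  have TT: "TT (dl (j, j)) = smv ((lam - 1) ^ 2) (dl (j, j)) + smv 4 (EE (FF (dl (j, j))))"
    by (simp add: cc_def act_add h2 h3)
  show ?thesis
  proof (cases "j + 1 < CHAR('k)")
    case True
    have "sv j = (lam - 1) ^ 2 + 4 * (of_nat (j + 1) * (lam + of_nat j))"
      by (simp add: sv_def power2_eq_square algebra_simps)
    then show ?thesis using True j unfolding TT
      by (simp add: EF_djj fun_eq_iff vapp algebra_simps)
  next
    case False
    then have "j + 1 = CHAR('k)" using j by simp
    then have "(of_nat j :: 'k) = -1" by (rule of_nat_pm1)
    then have "sv j = (lam - 1) ^ 2" by (simp add: sv_def algebra_simps)
    then show ?thesis using False j unfolding TT
      by (simp add: EF_djj)
  qed
qed

definition Dg :: "nat \<Rightarrow> 'k vec \<Rightarrow> bool" where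
  "Dg j u \<longleftrightarrow> (\<forall>a i. u (a, i) \<noteq> 0 \<longrightarrow> a = i \<and> j \<le> i \<and> i < CHAR('k))"

lemma diag_decomp: "Dg j u \<Longrightarrow> u = (\<Sum>i\<in>{j..<CHAR('k)}. smv (u (i, i)) (dl (i, i)))"
proof (rule ext, clarify)
  fix a b assume D: "Dg j u"
  have "(\<Sum>i\<in>{j..<CHAR('k)}. smv (u (i, i)) (dl (i, i))) (a, b) = (\<Sum>i\<in>{j..<CHAR('k)}. if i = a \<and> a = b then u (a, b) else 0)"
    by (simp add: sum_app smv_app dl_def) (rule sum.cong, auto)
  also have "\<dots> = u (a, b)"
    using D unfolding Dg_def by (cases "a = b") (auto simp: sum.delta)
  finally show "u (a, b) = (\<Sum>i\<in>{j..<CHAR('k)}. smv (u (i, i)) (dl (i, i))) (a, b)" by simp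
qed

lemma T_dl_app: "i < CHAR('k) \<Longrightarrow> TT (dl (i, i)) (a, b) =
    (if (a, b) = (i, i) then sv i else 0) + (if i + 1 < CHAR('k) \<and> (a, b) = (i + 1, i + 1) then 4 else 0)"
  by (simp add: T_djj vapp smv_app) (simp add: dl_def)

lemma T_dl_coord: "j \<le> i \<Longrightarrow> i < CHAR('k) \<Longrightarrow> TT (dl (i, i)) (j, j) = (if i = j then sv j else 0)"
  by (simp add: T_dl_app)

lemma T_dl_supp: "i < CHAR('k) \<Longrightarrow> TT (dl (i, i)) (a, b) \<noteq> 0 \<Longrightarrow> a = b \<and> i \<le> a \<and> a < CHAR('k)"
  by (auto simp: T_dl_app split: if_splits)

lemma T_Dg: "Dg j u \<Longrightarrow> Dg j (TT u) \<and> TT u (j, j) = sv j * u (j, j)"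
proof -
  assume D: "Dg j u"
  have TU: "TT u = (\<Sum>i\<in>{j..<CHAR('k)}. smv (u (i, i)) (TT (dl (i, i))))"
    by (subst diag_decomp[OF D]) (simp add: act_vsum act_lin_smv)
  have "Dg j (TT u)"
    unfolding Dg_def
  proof (intro allI impI)
    fix a b assume "TT u (a, b) \<noteq> 0"
    then have "(\<Sum>i\<in>{j..<CHAR('k)}. u (i, i) * TT (dl (i, i)) (a, b)) \<noteq> 0"
      by (simp add: TU sum_app smv_app)
    then obtain i where "i \<in> {j..<CHAR('k)}" "u (i, i) * TT (dl (i, i)) (a, b) \<noteq> 0"
      by (meson sum.not_neutral_contains_not_neutral)
    then show "a = b \<and> j \<le> b \<and> b < CHAR('k)" using T_dl_supp[of i a b] by auto
  qed
  moreover have "TT u (j, j) = sv j * u (j, j)"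
  proof (cases "j < CHAR('k)")
    case True
    have "TT u (j, j) = (\<Sum>i\<in>{j..<CHAR('k)}. u (i, i) * TT (dl (i, i)) (j, j))"
      by (simp add: TU sum_app smv_app)
    also have "\<dots> = (\<Sum>i\<in>{j..<CHAR('k)}. if i = j then u (j, j) * sv j else 0)"
      by (rule sum.cong) (auto simp: T_dl_coord)
    also have "\<dots> = sv j * u (j, j)" using True by (simp add: mult.commute)
    finally show ?thesis .
  next
    case False
    then have "u (j, j) = 0" using D by (auto simp: Dg_def)
    moreover have "TT u (j, j) = 0" using \<open>Dg j (TT u)\<close> False by (auto simp: Dg_def)
    ultimately show ?thesis by simp
  qed
  ultimately show ?thesis by blast
qed

lemma Tn: "j < CHAR('k) \<Longrightarrow> Dg j ((TT ^^ n) (dl (j, j))) \<and> (TT ^^ n) (dl (j, j)) (j, j) = sv j ^ n"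
proof (induction n)
  case 0 then show ?case by (auto simp: Dg_def dl_def)
next
  case (Suc n) then show ?case using T_Dg by auto
qed

lemma ev_coord: "j < CHAR('k) \<Longrightarrow> act lam sf (ev q cc) (dl (j, j)) (j, j) = poly q (sv j)"
proof -
  assume j: "j < CHAR('k)"
  have "act lam sf (ev q cc) (dl (j, j)) = (\<Sum>i\<le>degree q. smv (coeff q i) ((TT ^^ i) (dl (j, j))))"
    using j by (simp add: ev_def act_sum act_scmult act_pow proj_dl)
  then show ?thesis using j Tn by (simp add: sum_app smv_app poly_altdef)
qed

lemma divides: "j < CHAR('k) \<Longrightarrow> act lam sf (ev q cc) (dl (j, j)) = 0 \<Longrightarrow>
    (\<Prod>i\<in>{j..<CHAR('k)}. [:- sv i, 1:]) dvd q"
proof (induction "CHAR('k) - j" arbitrary: j q rule: less_induct)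
  case less
  have "poly q (sv j) = 0" using ev_coord[OF less.prems(1), of q] less.prems(2) by (simp add: vapp)
  then obtain q1 where q1: "q = [:- sv j, 1:] * q1" by (auto simp: poly_eq_0_iff_dvd dvd_def)
  have prod: "(\<Prod>i\<in>{j..<CHAR('k)}. [:- sv i, 1:]) = [:- sv j, 1:] * (\<Prod>i\<in>{Suc j..<CHAR('k)}. [:- sv i, 1:])"
    using less.prems(1) by (simp add: prod.atLeast_Suc_lessThan)
  show ?case
  proof (cases "j + 1 < CHAR('k)")
    case False
    then have "{Suc j..<CHAR('k)} = {}" by auto
    then have "(\<Prod>i\<in>{j..<CHAR('k)}. [:- sv i, 1:]) = [:- sv j, 1:]" using prod by simp
    then show ?thesis unfolding q1 by (simp only: dvd_triv_left)
  next
    case True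
    have "q = q1 * [:- sv j, 1:]" using q1 by (simp only: mult.commute)
    then have "ev q cc = ev q1 cc * ev [:- sv j, 1:] cc" by (simp only: ev_mult)
    also have "ev [:- sv j, 1:] cc = cc - sc (sv j)" by (simp add: ev_lin sc_uminus)
    finally have "act lam sf (ev q cc) (dl (j, j)) = act lam sf (ev q1 cc) (act lam sf (cc - sc (sv j)) (dl (j, j)))"
      by (simp only: act_mult)
    also have "act lam sf (cc - sc (sv j)) (dl (j, j)) = smv 4 (dl (j + 1, j + 1))"
      using True less.prems(1) by (simp add: act_diff act_sc proj_dl T_djj fun_eq_iff vapp)
    finally have "smv 4 (act lam sf (ev q1 cc) (dl (j + 1, j + 1))) = 0"
      using less.prems(2) by (simp add: act_lin_smv)
    then have "act lam sf (ev q1 cc) (dl (j + 1, j + 1)) = 0"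
      using four_nz by (auto simp: fun_eq_iff vapp)
    then have "(\<Prod>i\<in>{j + 1..<CHAR('k)}. [:- sv i, 1:]) dvd q1"
      using True less.prems(1) by (intro less.hyps) auto
    then show ?thesis unfolding prod q1 by (intro mult_dvd_mono) simp_all
  qed
qed

end

lemma main:
  fixes sf sh :: "'k::field"
  assumes pr: "prime CHAR('k)" and p2: "CHAR('k) > 2"
    and AC: "\<forall>q :: 'k poly. degree q > 0 \<longrightarrow> (\<exists>x. poly q x = 0)"
  shows "vanishes_in sf sh (fa_poly q casimir) \<longleftrightarrow> (gpoly - [:sh ^ 2:]) dvd q"
proof -
  have van: "vanishes_in sf sh (fa_poly q casimir) \<longleftrightarrow> ev q cc \<in> JJ sf sh"
    by (simp add: vanishes_in_def JJ_def Psi_ev Psi_cc)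
  obtain l0 where l0: "poly (XP sh) l0 = 0"
    using AC degree_XP[OF pr p2, of sh] p2 by force
  then have l0': "l0 ^ CHAR('k) - l0 = sh"
    by (simp add: XP_def[OF pr p2] poly_monom)
  interpret sq: sl2q "JJ sf sh" sf sh
    by (rule sl2q.intro[OF JJ_rideal]) (unfold_locales, use rels_JJ in blast)
  have Xp_eq: "sq.Xp = XP sh" by (simp add: sq.Xp_def XP_def[OF pr p2])
  show ?thesis
  proof
    assume "(gpoly - [:sh ^ 2:]) dvd q"
    then obtain r where r: "q = (gpoly - [:sh ^ 2:]) * r" by (auto simp: dvd_def)
    define L where "L = (\<lambda>t. XP sh div [:- (l0 + of_nat t), 1:])"
    have "ev (gpoly - [:sh ^ 2:]) cc \<in> JJ sf sh"
    proof (rule sq.main_a[where T = "{..<CHAR('k)}" and L = L and \<nu> = "\<lambda>t. l0 + of_nat t"])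
      show "finite {..<CHAR('k)}" by simp
      show "(\<Sum>t<CHAR('k). L t) = -1" unfolding L_def by (rule lagrange(2)[OF pr p2 l0'])
      fix t assume "t \<in> {..<CHAR('k)}"
      show "[:- (l0 + of_nat t), 1:] * L t = sq.Xp" unfolding L_def Xp_eq by (rule lagrange(1)[OF pr p2 l0'])
      have "(l0 + of_nat t) ^ CHAR('k) - (l0 + of_nat t) = sh"
        using XP_root[OF pr p2 l0', of t] by (simp add: XP_def[OF pr p2] poly_monom)
      then show "gpoly - [:sh ^ 2:] = (\<Prod>i<CHAR('k). [:- ((l0 + of_nat t + 1 + of_nat (2 * i)) ^ 2), 1:])"
        by (rule UI[OF pr p2 AC])
    qed
    then have "ev (gpoly - [:sh ^ 2:]) cc * ev r cc \<in> JJ sf sh" by (rule JJ_rmul)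
    then have "ev q cc \<in> JJ sf sh" by (simp only: r ev_mult)
    then show "vanishes_in sf sh (fa_poly q casimir)" using van by simp
  next
    assume "vanishes_in sf sh (fa_poly q casimir)"
    then have inJ: "ev q cc \<in> JJ sf (l0 ^ CHAR('k) - l0)" using van l0' by simp
    interpret rp: rep l0 sf by unfold_locales (use pr p2 in auto)
    have "act l0 sf (ev q cc) (rp.dl (0, 0)) = 0" by (rule rp.act_JJ[OF inJ])
    then have "(\<Prod>i\<in>{0..<CHAR('k)}. [:- rp.sv i, 1:]) dvd q"
      using p2 by (intro rp.divides) auto
    moreover have "(\<Prod>i\<in>{0..<CHAR('k)}. [:- rp.sv i, 1:]) = gpoly - [:sh ^ 2:]"
      by (simp add: UI[OF pr p2 AC l0'] rp.sv_def atLeast0LessThan)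
    ultimately show "(gpoly - [:sh ^ 2:]) dvd q" by simp
  qed
qed

theorem proposition4p1:
  fixes a :: "'k::field"
  assumes "prime CHAR('k)" and "CHAR('k) > 2"
    and "\<forall>q :: 'k poly. degree q > 0 \<longrightarrow> (\<exists>x. poly q x = 0)"
    and "a \<noteq> 0"
  defines "p \<equiv> CHAR('k)"
  defines "g \<equiv> monom (1::'k) p - smult 2 (monom 1 ((p + 1) div 2)) + monom 1 1"
  shows "(\<forall>q. vanishes_in 0 0 (fa_poly q casimir) \<longleftrightarrow> g dvd q)
       \<and> (\<forall>q. vanishes_in 1 0 (fa_poly q casimir) \<longleftrightarrow> g dvd q)
       \<and> (\<forall>q. vanishes_in 0 a (fa_poly q casimir) \<longleftrightarrow> (g - [:a^2:]) dvd q)"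
proof -
  have g: "g = gpoly" by (simp add: g_def p_def gpoly_def[OF assms(1,2,3)])
  show ?thesis
    using main[OF assms(1,2,3), of 0 0] main[OF assms(1,2,3), of 1 0] main[OF assms(1,2,3), of 0 a]
    by (simp add: g)
qed

end
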